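(* Assume the setting described in the context, assume for all $x\in[a,b]^{\ell_0}$ that $f(x)=f(0)$, let $(\gamma_n)_{n\in\mathbb N_0}\subseteq[0,\infty)$, let $(\Theta_n)_{n\in\mathbb N_0}\colon\mathbb N_0\to\mathbb R^{\mathfrak d}$ satisfy for all $n\in\mathbb N_0$ that $\Theta_{n+1}=\Theta_n-\gamma_n\mathcal G(\Theta_n)$, and assume $\sum_{n=0}^\infty\gamma_n=\infty$ and $$\sup_{n\in\mathbb N_0}(\gamma_n\mathfrak m)<\Big(L\mathbf a^2\Big[\prod_{p=0}^L(\ell_p+1)\Big](2V(\Theta_0)+4L^2\|f(0)\|^2+1)^{L-1}\Big)^{-1}.$$ Then (i) $\sup_{n\in\mathbb N_0}\|\Theta_n\|\le[2V(\Theta_0)+4L^2\|f(0)\|^2]^{1/2}<\infty$ and (ii) $\limsup_{n\to\infty}\mathcal L_\infty(\Theta_n)=0$.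
   Context: Setting. Let $L,\mathfrak d\in\mathbb N=\{1,2,\dots\}$, $(\ell_k)_{k\in\mathbb N_0}\subseteq\mathbb N$, $a\in\mathbb R$, $b\in(a,\infty)$, $\mathscr A\in(0,\infty)$, $\mathscr B\in(\mathscr A,\infty)$ with $\mathfrak d=\sum_{k=1}^L\ell_k(\ell_{k-1}+1)$; let $\mathbf a=\max\{|a|,|b|,1\}$ and $\mathbf d_k=\sum_{h=1}^k\ell_h(\ell_{h-1}+1)$ for $k\in\mathbb N_0$. For $\theta=(\theta_1,\dots,\theta_{\mathfrak d})\in\mathbb R^{\mathfrak d}$, $k\in\{1,\dots,L\}$, $i\in\{1,\dots,\ell_k\}$, $j\in\{1,\dots,\ell_{k-1}\}$ let $\mathfrak w^{k,\theta}_{i,j}=\theta_{(i-1)\ell_{k-1}+j+\mathbf d_{k-1}}$ and $\mathfrak b^{k,\theta}_i=\theta_{\ell_k\ell_{k-1}+i+\mathbf d_{k-1}}$, let $\mathfrak w^{k,\theta}=(\mathfrak w^{k,\theta}_{i,j})_{i,j}\in\mathbb R^{\ell_k\times\ell_{k-1}}$, $\mathfrak b^{k,\theta}=(\mathfrak b^{k,\theta}_1,\dots,\mathfrak b^{k,\theta}_{\ell_k})\in\mathbb R^{\ell_k}$, and $\mathcal A^\theta_k\colon\mathbb R^{\ell_{k-1}}\to\mathbb R^{\ell_k}$, $\mathcal A^\theta_k(x)=\mathfrak b^{k,\theta}+\mathfrak w^{k,\theta}x$. Let $\mathscr R_\infty(x)=\max\{x,0\}$ and let $\mathscr R_r\colon\mathbb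 R\to\mathbb R$, $r\in[1,\infty)$, satisfy for all $r\in[1,\infty)$: $\mathscr R_r\in C^1(\mathbb R,\mathbb R)$, $\mathscr R_r(x)=0$ for all $x\le\mathscr A r^{-1}$, $0\le\mathscr R_r(y)\le\max\{y,0\}$ for all $y\in\mathbb R$, $\mathscr R_r(z)=z$ for all $z\ge\mathscr B r^{-1}$; assume $\sup_{r\in[1,\infty)}\sup_{x\in\mathbb R}|(\mathscr R_r)'(x)|<\infty$. $\|\cdot\|$, $\langle\cdot,\cdot\rangle$ are the Euclidean norm and scalar product on each $\mathbb R^n$; for $r\in[1,\infty]$, $\mathfrak M_r(x_1,\dots,x_n)=(\mathscr R_r(x_1),\dots,\mathscr R_r(x_n))$. For $r\in[1,\infty]$, $\theta\in\mathbb R^{\mathfrak d}$ define $\mathcal N^{k,\theta}_r\colon\mathbb R^{\ell_0}\to\mathbb R^{\ell_k}$, $k\in\{1,\dots,L\}$, by $\mathcal N^{1,\theta}_r=\mathcal A^\theta_1$ and $\mathcal N^{k+1,\theta}_r(x)=\mathcal A^\theta_{k+1}(\mathfrak M_{r^{1/k}}(\mathcal N^{k,\theta}_r(x)))$ (with $\infty^{1/k}=\infty$). Let $\mu$ be a measure on the Borel $\sigma$-algebra of $[a,b]^{\ell_0}$ with $\mathfrak m=\mu([a,b]^{\ell_0})\in\mathbb R$, let $f=(f_1,\dots,f_{\ell_L})\colon\mathbb R^{\ell_0}\to\mathbb R^{\ell_L}$ be measurable (only its values on $[a,b]^{\ell_0}$ and the value $f(0)$ enter), and for $r\in[1,\infty]$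 let $\mathcal L_r\colon\mathbb R^{\mathfrak d}\to\mathbb R$ be given by $\mathcal L_r(\theta)=\int_{[a,b]^{\ell_0}}\|\mathcal N^{L,\theta}_r(x)-f(x)\|^2\,\mu(dx)$ (these integrals are real numbers as part of the setting). Let $\mathcal G\colon\mathbb R^{\mathfrak d}\to\mathbb R^{\mathfrak d}$ satisfy $\mathcal G(\theta)=\lim_{r\to\infty}(\nabla\mathcal L_r)(\theta)$ for every $\theta$ for which $((\nabla\mathcal L_r)(\theta))_{r\in[1,\infty)}$ is convergent as $r\to\infty$. Let $V\colon\mathbb R^{\mathfrak d}\to\mathbb R$, $V(\theta)=\big[\sum_{k=1}^L\big(k\|\mathfrak b^{k,\theta}\|^2+\sum_{i=1}^{\ell_k}\sum_{j=1}^{\ell_{k-1}}|\mathfrak w^{k,\theta}_{i,j}|^2\big)\big]-2L\langle f(0),\mathfrak b^{L,\theta}\rangle$. *)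

theory Defs
  imports "HOL-Analysis.Analysis"
begin

text \<open>Parameter vectors theta in R^d are elements of real^'n, where the coordinate
  theta_i (i = 1..d) is theta $ idx i for a fixed bijection idx : {1..d} -> 'n.
  Inputs x in R^(l_0) are elements of real^'m, with x_j = x $ idx0 j.
  Vectors in R^(l_k) (k >= 1) are functions nat => real, meaningful on {1..l_k}.\<close>

definition dd :: "(nat \<Rightarrow> nat) \<Rightarrow> nat \<Rightarrow> nat" where
  "dd ls k = (\<Sum>h=1..k. ls h * (ls (h - 1) + 1))"

definition wt :: "(nat \<Rightarrow> nat) \<Rightarrow> (nat \<Rightarrow> 'n) \<Rightarrow> real^'n \<Rightarrow> nat \<Rightarrow> nat \<Rightarrow> nat \<Rightarrow> real" where
  "wt ls idx \<theta> k i j = \<theta> $ idx ((i - 1) * ls (k - 1) + j + dd ls (k - 1))"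

definition bs :: "(nat \<Rightarrow> nat) \<Rightarrow> (nat \<Rightarrow> 'n) \<Rightarrow> real^'n \<Rightarrow> nat \<Rightarrow> nat \<Rightarrow> real" where
  "bs ls idx \<theta> k i = \<theta> $ idx (ls k * ls (k - 1) + i + dd ls (k - 1))"

fun net :: "(nat \<Rightarrow> nat) \<Rightarrow> (nat \<Rightarrow> 'n) \<Rightarrow> (nat \<Rightarrow> 'm) \<Rightarrow> (nat \<Rightarrow> real \<Rightarrow> real)
            \<Rightarrow> real^'n \<Rightarrow> nat \<Rightarrow> real^'m \<Rightarrow> nat \<Rightarrow> real" where
  "net ls idx idx0 act \<theta> 0 x = (\<lambda>_. 0)"
| "net ls idx idx0 act \<theta> (Suc 0) x =
     (\<lambda>i. bs ls idx \<theta> 1 i + (\<Sum>j=1..ls 0. wt ls idx \<theta> 1 i j * x $ idx0 j))"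
| "net ls idx idx0 act \<theta> (Suc (Suc k)) x =
     (\<lambda>i. bs ls idx \<theta> (Suc (Suc k)) i +
          (\<Sum>j=1..ls (Suc k). wt ls idx \<theta> (Suc (Suc k)) i j
                 * act (Suc k) (net ls idx idx0 act \<theta> (Suc k) x j)))"

definition act_r :: "(real \<Rightarrow> real \<Rightarrow> real) \<Rightarrow> real \<Rightarrow> nat \<Rightarrow> real \<Rightarrow> real" where
  "act_r R r k = R (r powr (1 / real k))"

definition act_inf :: "nat \<Rightarrow> real \<Rightarrow> real" where
  "act_inf k = (\<lambda>x. max x 0)"

definition err :: "(nat \<Rightarrow> nat) \<Rightarrow> nat \<Rightarrow> (nat \<Rightarrow> 'n) \<Rightarrow> (nat \<Rightarrow> 'm) \<Rightarrow> (nat \<Rightarrow> real \<Rightarrow> real)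
            \<Rightarrow> (real^'m \<Rightarrow> nat \<Rightarrow> real) \<Rightarrow> real^'n \<Rightarrow> real^'m \<Rightarrow> real" where
  "err ls L idx idx0 act f \<theta> x = (\<Sum>i=1..ls L. (net ls idx idx0 act \<theta> L x i - f x i)\<^sup>2)"

definition loss :: "(real^'m) measure \<Rightarrow> (nat \<Rightarrow> nat) \<Rightarrow> nat \<Rightarrow> (nat \<Rightarrow> 'n) \<Rightarrow> (nat \<Rightarrow> 'm)
            \<Rightarrow> (nat \<Rightarrow> real \<Rightarrow> real) \<Rightarrow> (real^'m \<Rightarrow> nat \<Rightarrow> real) \<Rightarrow> real^'n \<Rightarrow> real" where
  "loss \<mu> ls L idx idx0 act f \<theta> = (\<integral>x. err ls L idx idx0 act f \<theta> x \<partial>\<mu>)"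

definition Vfun :: "(nat \<Rightarrow> nat) \<Rightarrow> nat \<Rightarrow> (nat \<Rightarrow> 'n) \<Rightarrow> (nat \<Rightarrow> real) \<Rightarrow> real^'n \<Rightarrow> real" where
  "Vfun ls L idx f0 \<theta> =
     (\<Sum>k=1..L. real k * (\<Sum>i=1..ls k. (bs ls idx \<theta> k i)\<^sup>2)
                + (\<Sum>i=1..ls k. \<Sum>j=1..ls (k - 1). (wt ls idx \<theta> k i j)\<^sup>2))
     - 2 * real L * (\<Sum>i=1..ls L. f0 i * bs ls idx \<theta> L i)"

end

theory Submission
  imports Defs
begin


lemma sum_shift_block: "(\<Sum>p\<in>{d+1..d+s}. F p) = (\<Sum>i=1..s. F (i + d))" for d s :: nat
  using sum.shift_bounds_cl_nat_ivl[of F 1 d s] by (simp add: add.commute)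

lemma sum_rows: "(\<Sum>q=1..n*m. G q) = (\<Sum>i=1..n. \<Sum>j=1..m. G ((i-1)*m + j))" for n m :: nat
proof (induction n)
  case 0 then show ?case by simp
next
  case (Suc n)
  have "{1..Suc n * m} = {1..n*m} \<union> {n*m+1..n*m+m}" by auto
  then have "(\<Sum>q=1..Suc n*m. G q) = (\<Sum>q=1..n*m. G q) + (\<Sum>q\<in>{n*m+1..n*m+m}. G q)"
    by (simp add: sum.union_disjoint[symmetric] ivl_disj_int)
  also have "(\<Sum>q\<in>{n*m+1..n*m+m}. G q) = (\<Sum>j=1..m. G (j + n*m))" by (rule sum_shift_block)
  finally show ?case using Suc by (simp add: add.commute)
qed

lemma dd_Suc: "dd ls (Suc K) = dd ls K + ls (Suc K) * (ls K + 1)"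
  by (simp add: dd_def)

lemma dd_0[simp]: "dd ls 0 = 0" by (simp add: dd_def)

lemma sum_layers:
  "(\<Sum>p=1..dd ls K. F p) = (\<Sum>k=1..K. (\<Sum>i=1..ls k. \<Sum>j=1..ls (k-1). F ((i - 1) * ls (k - 1) + j + dd ls (k - 1)))
        + (\<Sum>i=1..ls k. F (ls k * ls (k - 1) + i + dd ls (k - 1))))"
proof (induction K)
  case 0 then show ?case by simp
next
  case (Suc K)
  let ?d = "dd ls K" and ?n = "ls (Suc K)" and ?m = "ls K"
  have e: "{1..dd ls (Suc K)} = {1..?d} \<union> {?d+1..?d+?n*?m} \<union> {?d+?n*?m+1..?d+?n*?m+?n}"
    by (auto simp: dd_Suc algebra_simps)
  have "(\<Sum>p=1..dd ls (Suc K). F p) = (\<Sum>p=1..?d. F p) + (\<Sum>p\<in>{?d+1..?d+?n*?m}. F p) + (\<Sum>p\<in>{?d+?n*?m+1..?d+?n*?m+?n}. F p)"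
    unfolding e by (subst sum.union_disjoint; auto)+
  also have "(\<Sum>p\<in>{?d+1..?d+?n*?m}. F p) = (\<Sum>q=1..?n*?m. F (q + ?d))" by (rule sum_shift_block)
  also have "\<dots> = (\<Sum>i=1..?n. \<Sum>j=1..?m. F ((i-1)*?m + j + ?d))" by (rule sum_rows)
  also have "(\<Sum>p\<in>{?d+?n*?m+1..?d+?n*?m+?n}. F p) = (\<Sum>i=1..?n. F (i + (?d + ?n*?m)))"
    using sum_shift_block[where d="?d+?n*?m" and s="?n" and F=F] by (simp add: add.assoc)
  finally show ?case using Suc by (simp add: algebra_simps)
qed

definition tl2 :: "(nat \<Rightarrow> nat) \<Rightarrow> (nat \<Rightarrow> 'n) \<Rightarrow> real^'n \<Rightarrow> nat \<Rightarrow> real" where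
  "tl2 ls idx \<theta> k = (\<Sum>i=1..ls k. (bs ls idx \<theta> k i)\<^sup>2) + (\<Sum>i=1..ls k. \<Sum>j=1..ls (k-1). (wt ls idx \<theta> k i j)\<^sup>2)"

lemma tl2_nonneg: "tl2 ls idx \<theta> k \<ge> 0"
  unfolding tl2_def by (intro add_nonneg_nonneg sum_nonneg) auto

lemma norm_sq_layers:
  assumes "bij_betw idx {1..dd ls L} (UNIV :: 'n::finite set)"
  shows "(norm (\<theta>::real^'n))\<^sup>2 = (\<Sum>k=1..L. tl2 ls idx \<theta> k)"
proof -
  have "(norm \<theta>)\<^sup>2 = (\<Sum>c\<in>UNIV. (\<theta>$c)\<^sup>2)"
    unfolding power2_norm_eq_inner inner_vec_def by (simp add: power2_eq_square)
  also have "\<dots> = (\<Sum>p=1..dd ls L. (\<theta> $ idx p)\<^sup>2)"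
    using sum.reindex_bij_betw[OF assms, of "\<lambda>c. (\<theta>$c)\<^sup>2"] by simp
  also have "\<dots> = (\<Sum>k=1..L. tl2 ls idx \<theta> k)"
    by (subst sum_layers) (simp add: tl2_def wt_def bs_def add.commute)
  finally show ?thesis .
qed

lemma tl2_le_norm:
  assumes "bij_betw idx {1..dd ls L} (UNIV :: 'n::finite set)" "k \<in> {1..L}"
  shows "tl2 ls idx (\<theta>::real^'n) k \<le> (norm \<theta>)\<^sup>2"
  unfolding norm_sq_layers[OF assms(1)]
  by (rule member_le_sum) (use assms tl2_nonneg in auto)

lemma bs_add: "bs ls idx (x + y) k i = bs ls idx x k i + bs ls idx y k i" by (simp add: bs_def)
lemma bs_diff: "bs ls idx (x - y) k i = bs ls idx x k i - bs ls idx y k i" by (simp add: bs_def)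
lemma bs_scale: "bs ls idx (c *\<^sub>R x) k i = c * bs ls idx x k i" by (simp add: bs_def)
lemma bs_zero: "bs ls idx 0 k i = 0" by (simp add: bs_def)
lemma wt_add: "wt ls idx (x + y) k i j = wt ls idx x k i j + wt ls idx y k i j" by (simp add: wt_def)
lemma wt_diff: "wt ls idx (x - y) k i j = wt ls idx x k i j - wt ls idx y k i j" by (simp add: wt_def)
lemma wt_scale: "wt ls idx (c *\<^sub>R x) k i j = c * wt ls idx x k i j" by (simp add: wt_def)
lemma wt_zero: "wt ls idx 0 k i j = 0" by (simp add: wt_def)
lemmas bw_lin = bs_add bs_diff bs_scale bs_zero wt_add wt_diff wt_scale wt_zero


lemma two_mul_le: "s\<^sup>2 \<le> A * C \<Longrightarrow> A \<ge> 0 \<Longrightarrow> C \<ge> 0 \<Longrightarrow> 2 * p * s \<le> p\<^sup>2 * C + A" for p s A C :: real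
proof (cases "C = 0")
  case True
  assume "s\<^sup>2 \<le> A * C" "A \<ge> 0"
  with True have "s = 0" by simp
  with \<open>A \<ge> 0\<close> True show ?thesis by simp
next
  case False
  assume h: "s\<^sup>2 \<le> A * C" "A \<ge> 0" "C \<ge> 0"
  with False have Cp: "C > 0" by simp
  have "0 \<le> (p * C - s)\<^sup>2" by simp
  then have "2 * p * s * C \<le> p\<^sup>2 * C * C + s\<^sup>2" by (simp add: power2_eq_square algebra_simps)
  also have "\<dots> \<le> p\<^sup>2 * C * C + A * C" using h by simp
  finally have "(2 * p * s) * C \<le> (p\<^sup>2 * C + A) * C" by (simp add: algebra_simps)
  then show ?thesis using Cp by simp
qed

lemma row_cs:
  fixes a c :: "nat \<Rightarrow> real"
  shows "(p + (\<Sum>j\<in>J. a j * c j))\<^sup>2 \<le> (p\<^sup>2 + (\<Sum>j\<in>J. (a j)\<^sup>2)) * (1 + (\<Sum>j\<in>J. (c j)\<^sup>2))"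
proof -
  let ?s = "\<Sum>j\<in>J. a j * c j" and ?A = "\<Sum>j\<in>J. (a j)\<^sup>2" and ?C = "\<Sum>j\<in>J. (c j)\<^sup>2"
  have cs: "?s\<^sup>2 \<le> ?A * ?C" by (rule Cauchy_Schwarz_ineq_sum)
  have A0: "?A \<ge> 0" and C0: "?C \<ge> 0" by (auto intro: sum_nonneg)
  have "2 * p * ?s \<le> p\<^sup>2 * ?C + ?A" by (rule two_mul_le[OF cs A0 C0])
  have e1: "(p + ?s)\<^sup>2 = p\<^sup>2 + 2 * p * ?s + ?s\<^sup>2" by (simp add: power2_sum)
  have e2: "(p\<^sup>2 + ?A) * (1 + ?C) = p\<^sup>2 + p\<^sup>2 * ?C + ?A + ?A * ?C" by (simp add: algebra_simps)
  show ?thesis unfolding e1 e2 using cs \<open>2 * p * ?s \<le> _\<close> by linarith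
qed

lemma step_sq:
  fixes u v :: "nat \<Rightarrow> real"
  assumes U: "(\<Sum>i\<in>I. (u i)\<^sup>2) \<le> \<eta> * A" and V: "(\<Sum>i\<in>I. (v i)\<^sup>2) \<le> H * B"
    and nn: "\<eta> \<ge> 0" "A \<ge> 0" "H \<ge> 0" "B \<ge> 0"
  shows "(\<Sum>i\<in>I. (u i + v i)\<^sup>2) \<le> (\<eta> + H) * (A + B)"
proof -
  let ?U = "\<Sum>i\<in>I. (u i)\<^sup>2" and ?V = "\<Sum>i\<in>I. (v i)\<^sup>2" and ?W = "\<Sum>i\<in>I. u i * v i"
  have W: "?W\<^sup>2 \<le> ?U * ?V" by (rule Cauchy_Schwarz_ineq_sum)
  have U0: "?U \<ge> 0" and V0: "?V \<ge> 0" by (auto intro: sum_nonneg)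
  have "?U * ?V \<le> (\<eta> * A) * (H * B)" using U V U0 V0 by (intro mult_mono) auto
  also have "\<dots> = (\<eta> * B) * (H * A)" by (simp only: mult_ac)
  also have "\<dots> \<le> ((\<eta> * B + H * A) / 2)\<^sup>2"
  proof -
    have "((\<eta> * B + H * A) / 2)\<^sup>2 - (\<eta> * B) * (H * A) = ((\<eta> * B - H * A) / 2)\<^sup>2"
      by (simp add: power2_eq_square field_simps)
    moreover have "((\<eta> * B - H * A) / 2)\<^sup>2 \<ge> 0" by simp
    ultimately show ?thesis by linarith
  qed
  finally have W2: "?W\<^sup>2 \<le> ((\<eta> * B + H * A) / 2)\<^sup>2" using W by linarith
  have M0: "0 \<le> (\<eta> * B + H * A) / 2" using nn by simp
  have "?W \<le> (\<eta> * B + H * A) / 2" by (rule power2_le_imp_le[OF W2 M0])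
  have "(\<Sum>i\<in>I. (u i + v i)\<^sup>2) = ?U + 2 * ?W + ?V"
    by (simp add: power2_sum sum.distrib sum_distrib_left mult.assoc)
  also have "\<dots> \<le> (\<eta> + H) * (A + B)"
  proof -
    have "(\<eta> + H) * (A + B) = \<eta> * A + \<eta> * B + H * A + H * B" by (simp add: ring_distribs)
    then show ?thesis using U V \<open>?W \<le> _\<close> by argo
  qed
  finally show ?thesis .
qed


fun Dnet :: "(nat \<Rightarrow> nat) \<Rightarrow> (nat \<Rightarrow> 'n) \<Rightarrow> (nat \<Rightarrow> 'm) \<Rightarrow> (nat \<Rightarrow> real \<Rightarrow> real) \<Rightarrow> (nat \<Rightarrow> real \<Rightarrow> real)
            \<Rightarrow> real^'n \<Rightarrow> nat \<Rightarrow> real^'m \<Rightarrow> real^'n \<Rightarrow> nat \<Rightarrow> real" where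
  "Dnet ls idx idx0 act act' \<theta> 0 x h = (\<lambda>_. 0)"
| "Dnet ls idx idx0 act act' \<theta> (Suc 0) x h =
     (\<lambda>i. bs ls idx h 1 i + (\<Sum>j=1..ls 0. wt ls idx h 1 i j * x $ idx0 j))"
| "Dnet ls idx idx0 act act' \<theta> (Suc (Suc k)) x h =
     (\<lambda>i. bs ls idx h (Suc (Suc k)) i +
          (\<Sum>j=1..ls (Suc k). wt ls idx h (Suc (Suc k)) i j * act (Suc k) (net ls idx idx0 act \<theta> (Suc k) x j)
              + wt ls idx \<theta> (Suc (Suc k)) i j * act' (Suc k) (net ls idx idx0 act \<theta> (Suc k) x j)
                  * Dnet ls idx idx0 act act' \<theta> (Suc k) x h j))"

definition relu' :: "nat \<Rightarrow> real \<Rightarrow> real" where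
  "relu' k y = (if y > 0 then 1 else 0)"

lemma Dnet_hom:
  fixes \<theta> v :: "real^'n" and x :: "real^'m"
  assumes hb: "\<forall>k\<in>{1..K}. \<forall>i\<in>{1..ls k}. bs ls idx v k i = c * real k * bs ls idx \<theta> k i + (if k = K then e i else 0)"
    and hw: "\<forall>k\<in>{1..K}. \<forall>i\<in>{1..ls k}. \<forall>j\<in>{1..ls (k-1)}. wt ls idx v k i j = c * wt ls idx \<theta> k i j"
  shows "k \<in> {1..K} \<Longrightarrow> i \<in> {1..ls k} \<Longrightarrow>
     Dnet ls idx idx0 act_inf relu' \<theta> k x v i = c * real k * net ls idx idx0 act_inf \<theta> k x i + (if k = K then e i else 0)"
proof (induction k arbitrary: i)
  case 0 then show ?case by simp
next
  case (Suc k)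
  show ?case
  proof (cases k)
    case 0
    have "Dnet ls idx idx0 act_inf relu' \<theta> (Suc 0) x v i
        = c * 1 * bs ls idx \<theta> 1 i + (if 1 = K then e i else 0) + (\<Sum>j=1..ls 0. c * wt ls idx \<theta> 1 i j * x $ idx0 j)"
      using Suc.prems 0 hb hw by (auto intro!: sum.cong)
    also have "\<dots> = c * 1 * net ls idx idx0 act_inf \<theta> (Suc 0) x i + (if 1 = K then e i else 0)"
      by (simp add: algebra_simps sum_distrib_left)
    finally show ?thesis using 0 by simp
  next
    case (Suc k')
    have kK: "Suc k' < K" "Suc k' \<in> {1..K}" using Suc.prems \<open>k = Suc k'\<close> by auto
    have IH: "j \<in> {1..ls (Suc k')} \<Longrightarrow> Dnet ls idx idx0 act_inf relu' \<theta> (Suc k') x v j = c * real (Suc k') * net ls idx idx0 act_inf \<theta> (Suc k') x j" for j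
      using Suc.IH[of j] kK \<open>k = Suc k'\<close> by simp
    let ?n = "\<lambda>j. net ls idx idx0 act_inf \<theta> (Suc k') x j"
    have "Dnet ls idx idx0 act_inf relu' \<theta> (Suc (Suc k')) x v i
        = c * real (Suc (Suc k')) * bs ls idx \<theta> (Suc (Suc k')) i + (if Suc (Suc k') = K then e i else 0)
          + (\<Sum>j=1..ls (Suc k'). c * real (Suc (Suc k')) * (wt ls idx \<theta> (Suc (Suc k')) i j * act_inf (Suc k') (?n j)))"
    proof -
      have "\<And>j. j \<in> {1..ls (Suc k')} \<Longrightarrow>
         wt ls idx v (Suc (Suc k')) i j * act_inf (Suc k') (?n j)
              + wt ls idx \<theta> (Suc (Suc k')) i j * relu' (Suc k') (?n j) * Dnet ls idx idx0 act_inf relu' \<theta> (Suc k') x v j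
         = c * real (Suc (Suc k')) * (wt ls idx \<theta> (Suc (Suc k')) i j * act_inf (Suc k') (?n j))"
      proof -
        fix j assume j: "j \<in> {1..ls (Suc k')}"
        have w: "wt ls idx v (Suc (Suc k')) i j = c * wt ls idx \<theta> (Suc (Suc k')) i j"
          using hw Suc.prems \<open>k = Suc k'\<close> j by auto
        have r: "relu' (Suc k') (?n j) * (?n j) = act_inf (Suc k') (?n j)"
          by (simp add: relu'_def act_inf_def)
        show "?thesis j" unfolding w IH[OF j]
          using r by (simp add: algebra_simps)
      qed
      then show ?thesis using hb Suc.prems \<open>k = Suc k'\<close> by (auto intro!: sum.cong)
    qed
    also have "\<dots> = c * real (Suc (Suc k')) * net ls idx idx0 act_inf \<theta> (Suc (Suc k')) x i + (if Suc (Suc k') = K then e i else 0)"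
      by (simp add: algebra_simps sum_distrib_left)
    finally show ?thesis using \<open>k = Suc k'\<close> by simp
  qed
qed

lemma layer_sq:
  fixes b z :: "nat \<Rightarrow> real" and w :: "nat \<Rightarrow> nat \<Rightarrow> real"
  shows "(\<Sum>i\<in>I. (b i + (\<Sum>j\<in>J. w i j * z j))\<^sup>2)
     \<le> ((\<Sum>i\<in>I. (b i)\<^sup>2) + (\<Sum>i\<in>I. \<Sum>j\<in>J. (w i j)\<^sup>2)) * (1 + (\<Sum>j\<in>J. (z j)\<^sup>2))"
proof -
  have "(\<Sum>i\<in>I. (b i + (\<Sum>j\<in>J. w i j * z j))\<^sup>2) \<le> (\<Sum>i\<in>I. ((b i)\<^sup>2 + (\<Sum>j\<in>J. (w i j)\<^sup>2)) * (1 + (\<Sum>j\<in>J. (z j)\<^sup>2)))"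
    by (intro sum_mono row_cs)
  also have "\<dots> = ((\<Sum>i\<in>I. (b i)\<^sup>2) + (\<Sum>i\<in>I. \<Sum>j\<in>J. (w i j)\<^sup>2)) * (1 + (\<Sum>j\<in>J. (z j)\<^sup>2))"
    by (simp only: sum.distrib[symmetric] sum_distrib_right)
  finally show ?thesis .
qed

lemma mat_sq:
  fixes z :: "nat \<Rightarrow> real" and w :: "nat \<Rightarrow> nat \<Rightarrow> real"
  shows "(\<Sum>i\<in>I. (\<Sum>j\<in>J. w i j * z j)\<^sup>2) \<le> (\<Sum>i\<in>I. \<Sum>j\<in>J. (w i j)\<^sup>2) * (\<Sum>j\<in>J. (z j)\<^sup>2)"
proof -
  have "(\<Sum>i\<in>I. (\<Sum>j\<in>J. w i j * z j)\<^sup>2) \<le> (\<Sum>i\<in>I. (\<Sum>j\<in>J. (w i j)\<^sup>2) * (\<Sum>j\<in>J. (z j)\<^sup>2))"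
    by (intro sum_mono Cauchy_Schwarz_ineq_sum)
  also have "\<dots> = (\<Sum>i\<in>I. \<Sum>j\<in>J. (w i j)\<^sup>2) * (\<Sum>j\<in>J. (z j)\<^sup>2)"
    by (simp add: sum_distrib_right)
  finally show ?thesis .
qed

lemma tl2_1: "tl2 ls idx \<theta> k = (\<Sum>i=1..ls k. (bs ls idx \<theta> k i)\<^sup>2) + (\<Sum>i=1..ls k. \<Sum>j=1..ls (k-1). (wt ls idx \<theta> k i j)\<^sup>2)"
  by (simp add: tl2_def)

lemma act_sq_le:
  fixes act :: "nat \<Rightarrow> real \<Rightarrow> real" and g :: "nat \<Rightarrow> real"
  assumes "\<forall>k y. \<bar>act k y\<bar> \<le> \<bar>y\<bar>"
  shows "(\<Sum>j\<in>J. (act k (g j))\<^sup>2) \<le> (\<Sum>j\<in>J. (g j)\<^sup>2)"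
  using assms by (intro sum_mono) (metis abs_le_square_iff)

lemma net_bound:
  fixes \<theta> :: "real^'n" and x :: "real^'m"
  assumes act_le: "\<forall>k y. \<bar>act k y\<bar> \<le> \<bar>y\<bar>"
    and T: "\<forall>k\<in>{1..K}. tl2 ls idx \<theta> k \<le> T"
  shows "k \<in> {1..K} \<Longrightarrow> 1 + (\<Sum>i=1..ls k. (net ls idx idx0 act \<theta> k x i)\<^sup>2)
           \<le> (1 + T) ^ k * (1 + (\<Sum>j=1..ls 0. (x $ idx0 j)\<^sup>2))"
proof (induction k)
  case 0 then show ?case by simp
next
  case (Suc k)
  show ?case
  proof (cases k)
    case 0
    let ?X = "\<Sum>j=1..ls 0. (x $ idx0 j)\<^sup>2"
    have X0: "?X \<ge> 0" by (auto intro: sum_nonneg)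
    have t: "tl2 ls idx \<theta> 1 \<le> T" using T Suc.prems 0 by auto
    have "(\<Sum>i=1..ls 1. (net ls idx idx0 act \<theta> 1 x i)\<^sup>2) \<le> tl2 ls idx \<theta> 1 * (1 + ?X)"
      using layer_sq[of "\<lambda>i. bs ls idx \<theta> 1 i" "\<lambda>i j. wt ls idx \<theta> 1 i j" "\<lambda>j. x $ idx0 j" "{1..ls 0}" "{1..ls 1}"]
      by (simp add: tl2_def)
    also have "\<dots> \<le> T * (1 + ?X)" using t X0 by (intro mult_right_mono) auto
    finally show ?thesis using 0 X0 by (simp add: algebra_simps)
  next
    case (Suc k')
    let ?X = "\<Sum>j=1..ls 0. (x $ idx0 j)\<^sup>2"
    let ?n = "\<lambda>j. net ls idx idx0 act \<theta> (Suc k') x j"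
    have kK: "Suc k' \<in> {1..K}" "Suc (Suc k') \<in> {1..K}" using Suc.prems \<open>k = Suc k'\<close> by auto
    have IH: "1 + (\<Sum>j=1..ls (Suc k'). (?n j)\<^sup>2) \<le> (1 + T) ^ Suc k' * (1 + ?X)"
      using Suc.IH kK \<open>k = Suc k'\<close> by simp
    have t: "tl2 ls idx \<theta> (Suc (Suc k')) \<le> T" using T kK by auto
    have t0: "tl2 ls idx \<theta> (Suc (Suc k')) \<ge> 0" by (rule tl2_nonneg)
    have "(\<Sum>i=1..ls (Suc (Suc k')). (net ls idx idx0 act \<theta> (Suc (Suc k')) x i)\<^sup>2)
        \<le> tl2 ls idx \<theta> (Suc (Suc k')) * (1 + (\<Sum>j=1..ls (Suc k'). (act (Suc k') (?n j))\<^sup>2))"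
      using layer_sq[of "\<lambda>i. bs ls idx \<theta> (Suc (Suc k')) i" "\<lambda>i j. wt ls idx \<theta> (Suc (Suc k')) i j"
          "\<lambda>j. act (Suc k') (?n j)" "{1..ls (Suc k')}" "{1..ls (Suc (Suc k'))}"]
      by (simp add: tl2_def)
    also have "\<dots> \<le> tl2 ls idx \<theta> (Suc (Suc k')) * (1 + (\<Sum>j=1..ls (Suc k'). (?n j)\<^sup>2))"
      using act_sq_le[OF act_le, of "Suc k'" ?n "{1..ls (Suc k')}"] t0 by (intro mult_left_mono) auto
    finally have A: "1 + (\<Sum>i=1..ls (Suc (Suc k')). (net ls idx idx0 act \<theta> (Suc (Suc k')) x i)\<^sup>2)
        \<le> (1 + tl2 ls idx \<theta> (Suc (Suc k'))) * (1 + (\<Sum>j=1..ls (Suc k'). (?n j)\<^sup>2))"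
      by (simp add: algebra_simps) (smt (verit) sum_nonneg zero_le_power2)
    also have "\<dots> \<le> (1 + T) * ((1 + T) ^ Suc k' * (1 + ?X))"
      using t t0 IH by (intro mult_mono) (auto intro!: add_nonneg_nonneg sum_nonneg)
    finally show ?thesis using \<open>k = Suc k'\<close> by (simp add: algebra_simps)
  qed
qed


lemma Dnet_bound:
  fixes \<theta> h :: "real^'n" and x :: "real^'m" and act act' :: "nat \<Rightarrow> real \<Rightarrow> real"
  assumes act_le: "\<forall>k y. \<bar>act k y\<bar> \<le> \<bar>y\<bar>" and act'_le: "\<forall>k y. \<bar>act' k y\<bar> \<le> C"
    and T: "\<forall>k\<in>{1..K}. tl2 ls idx \<theta> k \<le> T"
  shows "k \<in> {1..K} \<Longrightarrow> (\<Sum>i=1..ls k. (Dnet ls idx idx0 act act' \<theta> k x h i)\<^sup>2)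
       \<le> (\<Sum>j=1..k. tl2 ls idx h j) * real k * (max 1 (C\<^sup>2)) ^ (k - 1) * (1 + T) ^ (k - 1)
          * (1 + (\<Sum>j=1..ls 0. (x $ idx0 j)\<^sup>2))"
proof (induction k)
  case 0 then show ?case by simp
next
  case (Suc k)
  let ?X = "1 + (\<Sum>j=1..ls 0. (x $ idx0 j)\<^sup>2)"
  have X0: "?X \<ge> 0" by (auto intro!: add_nonneg_nonneg sum_nonneg)
  have one: "1 \<in> {1..K}" using Suc.prems by auto
  have T0: "T \<ge> 0" using T one tl2_nonneg[of ls idx \<theta> 1] by (meson order_trans)
  show ?case
  proof (cases k)
    case 0
    have "(\<Sum>i=1..ls 1. (Dnet ls idx idx0 act act' \<theta> 1 x h i)\<^sup>2) \<le> tl2 ls idx h 1 * ?X"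
      using layer_sq[of "\<lambda>i. bs ls idx h 1 i" "\<lambda>i j. wt ls idx h 1 i j" "\<lambda>j. x $ idx0 j" "{1..ls 0}" "{1..ls 1}"]
      by (simp add: tl2_def)
    then show ?thesis using 0 by simp
  next
    case (Suc k')
    define k1 where "k1 = Suc k'"
    have kk: "k = k1" using Suc k1_def by simp
    let ?n = "\<lambda>j. net ls idx idx0 act \<theta> k1 x j"
    let ?D = "\<lambda>j. Dnet ls idx idx0 act act' \<theta> k1 x h j"
    define u where "u i = bs ls idx h (Suc k1) i + (\<Sum>j=1..ls k1. wt ls idx h (Suc k1) i j * act k1 (?n j))" for i
    define v where "v i = (\<Sum>j=1..ls k1. wt ls idx \<theta> (Suc k1) i j * (act' k1 (?n j) * ?D j))" for i
    define c2 where "c2 = max 1 (C\<^sup>2)"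
    define H where "H = (\<Sum>j=1..k1. tl2 ls idx h j)"
    define \<eta> where "\<eta> = tl2 ls idx h (Suc k1)"
    define A where "A = (1 + T) ^ k1 * ?X"
    define \<Phi> where "\<Phi> = real k1 * c2 ^ k' * (1 + T) ^ k' * ?X"
    define B where "B = T * C\<^sup>2 * \<Phi>"
    have c21: "c2 \<ge> 1" and c2C: "C\<^sup>2 \<le> c2" by (auto simp: c2_def)
    have H0: "H \<ge> 0" unfolding H_def by (auto intro!: sum_nonneg tl2_nonneg)
    have eta0: "\<eta> \<ge> 0" unfolding \<eta>_def by (rule tl2_nonneg)
    have A0: "A \<ge> 0" unfolding A_def using T0 X0 by simp
    have Phi0: "\<Phi> \<ge> 0" unfolding \<Phi>_def using T0 X0 c21 by simp
    have B0: "B \<ge> 0" unfolding B_def using T0 Phi0 by simp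
    have k1K: "k1 \<in> {1..K}" "Suc k1 \<in> {1..K}" using Suc.prems kk k1_def by auto
    have IH: "(\<Sum>j=1..ls k1. (?D j)\<^sup>2) \<le> H * \<Phi>"
      using Suc.IH k1K kk unfolding H_def \<Phi>_def c2_def k1_def by (simp add: mult.assoc)
    have NB: "1 + (\<Sum>j=1..ls k1. (?n j)\<^sup>2) \<le> A"
      unfolding A_def using net_bound[OF act_le T k1K(1)] by simp
    have dsplit: "Dnet ls idx idx0 act act' \<theta> (Suc k1) x h i = u i + v i" for i
      unfolding u_def v_def k1_def by (simp add: sum.distrib mult.assoc)
    have U: "(\<Sum>i=1..ls (Suc k1). (u i)\<^sup>2) \<le> \<eta> * A"
    proof -
      have "(\<Sum>i=1..ls (Suc k1). (u i)\<^sup>2) \<le> \<eta> * (1 + (\<Sum>j=1..ls k1. (act k1 (?n j))\<^sup>2))"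
        using layer_sq[of "\<lambda>i. bs ls idx h (Suc k1) i" "\<lambda>i j. wt ls idx h (Suc k1) i j"
          "\<lambda>j. act k1 (?n j)" "{1..ls k1}" "{1..ls (Suc k1)}"]
        unfolding u_def \<eta>_def by (simp add: tl2_def)
      also have "\<dots> \<le> \<eta> * A"
        using act_sq_le[OF act_le, of k1 ?n "{1..ls k1}"] NB eta0 by (intro mult_left_mono) auto
      finally show ?thesis .
    qed
    have V: "(\<Sum>i=1..ls (Suc k1). (v i)\<^sup>2) \<le> H * B"
    proof -
      have "(\<Sum>i=1..ls (Suc k1). (v i)\<^sup>2)
          \<le> (\<Sum>i=1..ls (Suc k1). \<Sum>j=1..ls k1. (wt ls idx \<theta> (Suc k1) i j)\<^sup>2) * (\<Sum>j=1..ls k1. (act' k1 (?n j) * ?D j)\<^sup>2)"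
        unfolding v_def by (rule mat_sq)
      also have "\<dots> \<le> T * (C\<^sup>2 * (H * \<Phi>))"
      proof (rule mult_mono)
        have "(\<Sum>i=1..ls (Suc k1). \<Sum>j=1..ls (Suc k1 - 1). (wt ls idx \<theta> (Suc k1) i j)\<^sup>2) \<le> tl2 ls idx \<theta> (Suc k1)"
          unfolding tl2_def by (auto intro!: sum_nonneg)
        then show "(\<Sum>i=1..ls (Suc k1). \<Sum>j=1..ls k1. (wt ls idx \<theta> (Suc k1) i j)\<^sup>2) \<le> T"
          using T k1K by force
        have "(\<Sum>j=1..ls k1. (act' k1 (?n j) * ?D j)\<^sup>2) \<le> (\<Sum>j=1..ls k1. C\<^sup>2 * (?D j)\<^sup>2)"
        proof (rule sum_mono)
          fix j
          have "(act' k1 (?n j))\<^sup>2 \<le> C\<^sup>2"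
            using act'_le abs_le_square_iff by (metis abs_ge_self abs_idempotent order_trans abs_of_nonneg abs_ge_zero order.trans)
          then show "(act' k1 (?n j) * ?D j)\<^sup>2 \<le> C\<^sup>2 * (?D j)\<^sup>2"
            by (simp add: power_mult_distrib mult_right_mono)
        qed
        also have "\<dots> \<le> C\<^sup>2 * (H * \<Phi>)" using IH by (simp add: sum_distrib_left[symmetric] mult_left_mono)
        finally show "(\<Sum>j=1..ls k1. (act' k1 (?n j) * ?D j)\<^sup>2) \<le> C\<^sup>2 * (H * \<Phi>)" .
      qed (use T0 in \<open>auto intro!: sum_nonneg\<close>)
      also have "\<dots> = H * B" unfolding B_def by simp
      finally show ?thesis .
    qed
    have main: "(\<Sum>i=1..ls (Suc k1). (u i + v i)\<^sup>2) \<le> (\<eta> + H) * (A + B)"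
      by (rule step_sq[OF U V eta0 A0 H0 B0])
    have AB: "A + B \<le> real (Suc k1) * c2 ^ k1 * (1 + T) ^ k1 * ?X"
    proof -
      have "A \<le> c2 ^ k1 * (1 + T) ^ k1 * ?X"
        unfolding A_def using c21 T0 X0 by (simp add: mult_right_mono one_le_power)
      moreover have "B \<le> real k1 * c2 ^ k1 * (1 + T) ^ k1 * ?X"
      proof -
        have "T * C\<^sup>2 \<le> (1 + T) * c2" using T0 c2C c21 by (intro mult_mono) auto
        then have "B \<le> ((1 + T) * c2) * \<Phi>" unfolding B_def using Phi0 by (intro mult_right_mono) auto
        also have "\<dots> = real k1 * c2 ^ k1 * (1 + T) ^ k1 * ?X"
          unfolding \<Phi>_def k1_def by (simp add: algebra_simps)
        finally show ?thesis .
      qed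
      ultimately show ?thesis by (simp add: algebra_simps)
    qed
    have "(\<Sum>i=1..ls (Suc k1). (Dnet ls idx idx0 act act' \<theta> (Suc k1) x h i)\<^sup>2) \<le> (\<eta> + H) * (A + B)"
      using main by (simp add: dsplit)
    also have "\<dots> \<le> (\<eta> + H) * (real (Suc k1) * c2 ^ k1 * (1 + T) ^ k1 * ?X)"
      using AB eta0 H0 by (intro mult_left_mono) auto
    also have "\<eta> + H = (\<Sum>j=1..Suc k1. tl2 ls idx h j)" unfolding \<eta>_def H_def by simp
    finally show ?thesis unfolding kk c2_def by (simp add: mult.assoc)
  qed
qed


lemma inner_layers:
  assumes "bij_betw idx {1..dd ls L} (UNIV :: 'n::finite set)"
  shows "(u::real^'n) \<bullet> w = (\<Sum>k=1..L. (\<Sum>i=1..ls k. bs ls idx u k i * bs ls idx w k i)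
                              + (\<Sum>i=1..ls k. \<Sum>j=1..ls (k-1). wt ls idx u k i j * wt ls idx w k i j))"
  (is "_ = ?rhs")
proof -
  have "u \<bullet> w = (\<Sum>c\<in>UNIV. u$c * w$c)" unfolding inner_vec_def by simp
  also have "\<dots> = (\<Sum>p=1..dd ls L. u $ idx p * w $ idx p)"
    using sum.reindex_bij_betw[OF assms, of "\<lambda>c. u$c * w$c"] by simp
  also have "\<dots> = ?rhs"
    by (subst sum_layers) (simp add: wt_def bs_def add.commute)
  finally show ?thesis .
qed

definition lay :: "(nat \<Rightarrow> nat) \<Rightarrow> nat \<Rightarrow> nat" where
  "lay ls p = (LEAST k. p \<le> dd ls k)"

lemma dd_mono: "k \<le> k' \<Longrightarrow> dd ls k \<le> dd ls k'"
  unfolding dd_def by (rule sum_mono2) auto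

lemma dd_Suc_gt: "ls (Suc k) \<ge> 1 \<Longrightarrow> dd ls k < dd ls (Suc k)"
  by (simp add: dd_Suc)

lemma dd_km1: "k \<ge> 1 \<Longrightarrow> dd ls k = dd ls (k - 1) + ls k * (ls (k - 1) + 1)"
  using dd_Suc[of ls "k - 1"] by simp

lemma lay_eq:
  assumes "k \<ge> 1" "dd ls (k - 1) < p" "p \<le> dd ls k"
  shows "lay ls p = k"
  unfolding lay_def
proof (rule Least_equality)
  show "p \<le> dd ls k" by fact
  fix k' assume "p \<le> dd ls k'"
  show "k \<le> k'"
  proof (rule ccontr)
    assume "\<not> k \<le> k'"
    then have "k' \<le> k - 1" by simp
    then have "dd ls k' \<le> dd ls (k - 1)" by (rule dd_mono)
    with assms \<open>p \<le> dd ls k'\<close> show False by simp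
  qed
qed

lemma posw_range:
  assumes "k \<ge> 1" "i \<in> {1..ls k}" "j \<in> {1..ls (k-1)}"
  shows "dd ls (k - 1) < (i - 1) * ls (k - 1) + j + dd ls (k - 1)"
    and "(i - 1) * ls (k - 1) + j + dd ls (k - 1) \<le> dd ls (k - 1) + ls k * ls (k - 1)"
proof -
  show "dd ls (k - 1) < (i - 1) * ls (k - 1) + j + dd ls (k - 1)" using assms by simp
  have h1: "(i - 1) * ls (k - 1) \<le> (ls k - 1) * ls (k - 1)" using assms by (intro mult_le_mono1) auto
  have h2: "(ls k - 1) * ls (k - 1) + ls (k - 1) = ls k * ls (k - 1)"
    using assms by (cases "ls k") auto
  have h3: "j \<le> ls (k - 1)" using assms by simp
  from h1 h2 h3 show "(i - 1) * ls (k - 1) + j + dd ls (k - 1) \<le> dd ls (k - 1) + ls k * ls (k - 1)"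
    by linarith
qed

lemma posb_range:
  assumes "k \<ge> 1" "i \<in> {1..ls k}"
  shows "dd ls (k - 1) + ls k * ls (k - 1) < ls k * ls (k - 1) + i + dd ls (k - 1)"
    and "ls k * ls (k - 1) + i + dd ls (k - 1) \<le> dd ls k"
  using assms dd_km1[of k ls] by (auto simp: algebra_simps)

definition vV :: "(nat \<Rightarrow> nat) \<Rightarrow> nat \<Rightarrow> (nat \<Rightarrow> 'n) \<Rightarrow> (nat \<Rightarrow> real) \<Rightarrow> real^'n \<Rightarrow> real^'n" where
  "vV ls L idx \<xi> \<theta> = (\<chi> c. (let p = inv_into {1..dd ls L} idx c; k = lay ls p in
      if p > dd ls (k - 1) + ls k * ls (k - 1)
      then 2 * real k * \<theta>$c - (if k = L then 2 * real L * \<xi> (p - dd ls (k - 1) - ls k * ls (k - 1)) else 0)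
      else 2 * \<theta>$c))"

lemma vV_bs:
  assumes bij: "bij_betw idx {1..dd ls L} (UNIV :: 'n::finite set)" and k: "k \<in> {1..L}" and i: "i \<in> {1..ls k}"
  shows "bs ls idx (vV ls L idx \<xi> (\<theta>::real^'n)) k i = 2 * real k * bs ls idx \<theta> k i - (if k = L then 2 * real L * \<xi> i else 0)"
proof -
  let ?p = "ls k * ls (k - 1) + i + dd ls (k - 1)"
  have r: "dd ls (k - 1) + ls k * ls (k - 1) < ?p" "?p \<le> dd ls k" using posb_range[of k i ls] k i by auto
  have pL: "?p \<in> {1..dd ls L}" using r dd_mono[of k L ls] k by auto
  have inv: "inv_into {1..dd ls L} idx (idx ?p) = ?p"
    using bij pL by (simp add: bij_betw_def inv_into_f_f)
  have l: "lay ls ?p = k" using lay_eq[of k ls ?p] r k by auto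
  show ?thesis unfolding bs_def vV_def vec_lambda_beta Let_def inv l using r by simp
qed

lemma vV_wt:
  assumes bij: "bij_betw idx {1..dd ls L} (UNIV :: 'n::finite set)" and k: "k \<in> {1..L}" and i: "i \<in> {1..ls k}"
    and j: "j \<in> {1..ls (k - 1)}"
  shows "wt ls idx (vV ls L idx \<xi> (\<theta>::real^'n)) k i j = 2 * wt ls idx \<theta> k i j"
proof -
  let ?p = "(i - 1) * ls (k - 1) + j + dd ls (k - 1)"
  have r: "dd ls (k - 1) < ?p" "?p \<le> dd ls (k - 1) + ls k * ls (k - 1)" using posw_range[of k i ls j] k i j by auto
  have r2: "?p \<le> dd ls k" using r(2) dd_km1[of k ls] k by auto
  have pL: "?p \<in> {1..dd ls L}" using r r2 dd_mono[of k L ls] k j by auto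
  have inv: "inv_into {1..dd ls L} idx (idx ?p) = ?p"
    using bij pL by (simp add: bij_betw_def inv_into_f_f)
  have l: "lay ls ?p = k" using lay_eq[of k ls ?p] r r2 k by auto
  show ?thesis unfolding wt_def vV_def vec_lambda_beta Let_def inv l using r by simp
qed


lemma sq_exp: "(\<Sum>i\<in>I. (a i - \<gamma> * b i)\<^sup>2) = (\<Sum>i\<in>I. (a i)\<^sup>2) - \<gamma> * (\<Sum>i\<in>I. 2 * a i * b i) + \<gamma>\<^sup>2 * (\<Sum>i\<in>I. (b i)\<^sup>2)"
  for a b :: "nat \<Rightarrow> real"
proof -
  have "(\<Sum>i\<in>I. (a i - \<gamma> * b i)\<^sup>2) = (\<Sum>i\<in>I. (a i)\<^sup>2 - \<gamma> * (2 * a i * b i) + \<gamma>\<^sup>2 * (b i)\<^sup>2)"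
    by (intro sum.cong) (auto simp: power2_eq_square algebra_simps)
  also have "\<dots> = (\<Sum>i\<in>I. (a i)\<^sup>2) - \<gamma> * (\<Sum>i\<in>I. 2 * a i * b i) + \<gamma>\<^sup>2 * (\<Sum>i\<in>I. (b i)\<^sup>2)"
    by (simp only: sum.distrib sum_subtractf sum_distrib_left)
  finally show ?thesis .
qed

lemma layer_exp:
  fixes a b :: "nat \<Rightarrow> real" and w u :: "nat \<Rightarrow> nat \<Rightarrow> real"
  shows "c * (\<Sum>i\<in>I. (a i - \<gamma> * b i)\<^sup>2) + (\<Sum>i\<in>I. \<Sum>j\<in>J. (w i j - \<gamma> * u i j)\<^sup>2)
   = (c * (\<Sum>i\<in>I. (a i)\<^sup>2) + (\<Sum>i\<in>I. \<Sum>j\<in>J. (w i j)\<^sup>2))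
     - \<gamma> * ((\<Sum>i\<in>I. 2 * c * a i * b i) + (\<Sum>i\<in>I. \<Sum>j\<in>J. 2 * w i j * u i j))
     + \<gamma>\<^sup>2 * (c * (\<Sum>i\<in>I. (b i)\<^sup>2) + (\<Sum>i\<in>I. \<Sum>j\<in>J. (u i j)\<^sup>2))"
proof -
  have "(\<Sum>i\<in>I. \<Sum>j\<in>J. (w i j - \<gamma> * u i j)\<^sup>2)
     = (\<Sum>i\<in>I. (\<Sum>j\<in>J. (w i j)\<^sup>2) - \<gamma> * (\<Sum>j\<in>J. 2 * w i j * u i j) + \<gamma>\<^sup>2 * (\<Sum>j\<in>J. (u i j)\<^sup>2))"
    by (simp only: sq_exp)
  also have "\<dots> = (\<Sum>i\<in>I. \<Sum>j\<in>J. (w i j)\<^sup>2) - \<gamma> * (\<Sum>i\<in>I. \<Sum>j\<in>J. 2 * w i j * u i j) + \<gamma>\<^sup>2 * (\<Sum>i\<in>I. \<Sum>j\<in>J. (u i j)\<^sup>2)"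
    by (simp only: sum.distrib sum_subtractf sum_distrib_left)
  finally have e: "(\<Sum>i\<in>I. \<Sum>j\<in>J. (w i j - \<gamma> * u i j)\<^sup>2) = \<dots>" .
  have e2: "(\<Sum>i\<in>I. 2 * c * a i * b i) = c * (\<Sum>i\<in>I. 2 * a i * b i)"
    by (simp add: sum_distrib_left mult_ac)
  show ?thesis unfolding e unfolding sq_exp e2 by (simp add: algebra_simps)
qed

lemma sum_lin3: "(\<Sum>k\<in>K. A k - \<gamma> * B k + \<delta> * C k) = sum A K - \<gamma> * sum B K + \<delta> * sum C K"
  for A B C :: "nat \<Rightarrow> real"
  by (simp add: sum.distrib sum_subtractf sum_distrib_left)

lemma V_step:
  assumes bij: "bij_betw idx {1..dd ls L} (UNIV :: 'n::finite set)"
  shows "Vfun ls L idx \<xi> ((\<theta>::real^'n) - \<gamma> *\<^sub>R g) = Vfun ls L idx \<xi> \<theta> - \<gamma> * (g \<bullet> vV ls L idx \<xi> \<theta>)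
          + \<gamma>\<^sup>2 * (\<Sum>k=1..L. real k * (\<Sum>i=1..ls k. (bs ls idx g k i)\<^sup>2) + (\<Sum>i=1..ls k. \<Sum>j=1..ls (k-1). (wt ls idx g k i j)\<^sup>2))"
proof -
  define X where "X = (\<Sum>k=1..L. (\<Sum>i=1..ls k. 2 * real k * bs ls idx \<theta> k i * bs ls idx g k i)
            + (\<Sum>i=1..ls k. \<Sum>j=1..ls (k-1). 2 * wt ls idx \<theta> k i j * wt ls idx g k i j))"
  define Pg where "Pg = (\<Sum>k=1..L. real k * (\<Sum>i=1..ls k. (bs ls idx g k i)\<^sup>2) + (\<Sum>i=1..ls k. \<Sum>j=1..ls (k-1). (wt ls idx g k i j)\<^sup>2))"
  define P1 where "P1 = (\<Sum>k=1..L. real k * (\<Sum>i=1..ls k. (bs ls idx \<theta> k i)\<^sup>2) + (\<Sum>i=1..ls k. \<Sum>j=1..ls (k-1). (wt ls idx \<theta> k i j)\<^sup>2))"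
  define Y where "Y = (\<Sum>i=1..ls L. \<xi> i * bs ls idx g L i)"
  define Z where "Z = (\<Sum>i=1..ls L. \<xi> i * bs ls idx \<theta> L i)"
  have V1: "Vfun ls L idx \<xi> \<theta> = P1 - 2 * real L * Z" unfolding Vfun_def P1_def Z_def by simp
  have V2: "Vfun ls L idx \<xi> (\<theta> - \<gamma> *\<^sub>R g) = P1 - \<gamma> * X + \<gamma>\<^sup>2 * Pg - 2 * real L * (Z - \<gamma> * Y)"
  proof -
    have a: "(\<Sum>k=1..L. real k * (\<Sum>i=1..ls k. (bs ls idx (\<theta> - \<gamma> *\<^sub>R g) k i)\<^sup>2) + (\<Sum>i=1..ls k. \<Sum>j=1..ls (k-1). (wt ls idx (\<theta> - \<gamma> *\<^sub>R g) k i j)\<^sup>2))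
      = P1 - \<gamma> * X + \<gamma>\<^sup>2 * Pg"
      unfolding P1_def X_def Pg_def bs_diff wt_diff bs_scale wt_scale layer_exp sum_lin3 ..
    have b: "(\<Sum>i=1..ls L. \<xi> i * bs ls idx (\<theta> - \<gamma> *\<^sub>R g) L i) = Z - \<gamma> * Y"
      unfolding Z_def Y_def bs_diff bs_scale by (simp add: algebra_simps sum_subtractf sum_distrib_left)
    show ?thesis unfolding Vfun_def a b by simp
  qed
  have gv: "g \<bullet> vV ls L idx \<xi> \<theta> = X - 2 * real L * Y"
  proof -
    have "g \<bullet> vV ls L idx \<xi> \<theta> = (\<Sum>k=1..L. (\<Sum>i=1..ls k. bs ls idx g k i * (2 * real k * bs ls idx \<theta> k i - (if k = L then 2 * real L * \<xi> i else 0)))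
        + (\<Sum>i=1..ls k. \<Sum>j=1..ls (k-1). wt ls idx g k i j * (2 * wt ls idx \<theta> k i j)))"
      unfolding inner_layers[OF bij] using vV_bs[OF bij] vV_wt[OF bij]
      by (intro sum.cong refl arg_cong2[where f="(+)"]) auto
    also have "\<dots> = (\<Sum>k=1..L. ((\<Sum>i=1..ls k. 2 * real k * bs ls idx \<theta> k i * bs ls idx g k i)
            + (\<Sum>i=1..ls k. \<Sum>j=1..ls (k-1). 2 * wt ls idx \<theta> k i j * wt ls idx g k i j))
            - (if k = L then 2 * real L * Y else 0))"
    proof (intro sum.cong refl)
      fix k assume "k \<in> {1..L}"
      show "(\<Sum>i=1..ls k. bs ls idx g k i * (2 * real k * bs ls idx \<theta> k i - (if k = L then 2 * real L * \<xi> i else 0)))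
        + (\<Sum>i=1..ls k. \<Sum>j=1..ls (k-1). wt ls idx g k i j * (2 * wt ls idx \<theta> k i j))
        = ((\<Sum>i=1..ls k. 2 * real k * bs ls idx \<theta> k i * bs ls idx g k i)
            + (\<Sum>i=1..ls k. \<Sum>j=1..ls (k-1). 2 * wt ls idx \<theta> k i j * wt ls idx g k i j))
            - (if k = L then 2 * real L * Y else 0)"
      proof (cases "k = L")
        case True
        then show ?thesis unfolding Y_def
          by (simp add: right_diff_distrib sum_subtractf sum_distrib_left mult_ac)
      next
        case False
        then show ?thesis by (simp add: mult_ac)
      qed
    qed
    also have "\<dots> = X - (\<Sum>k=1..L. (if k = L then 2 * real L * Y else 0))"
      unfolding X_def by (simp only: sum_subtractf)
    also have "(\<Sum>k=1..L. (if k = L then 2 * real L * Y else 0)) = (if L \<ge> 1 then 2 * real L * Y else 0)"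
      by (simp add: sum.delta')
    also have "\<dots> = 2 * real L * Y" by (cases "L = 0") (auto simp: Y_def)
    finally show ?thesis .
  qed
  show ?thesis unfolding V1 V2 gv Pg_def[symmetric] by (simp add: algebra_simps)
qed

lemma Pg_le:
  assumes bij: "bij_betw idx {1..dd ls L} (UNIV :: 'n::finite set)"
  shows "(\<Sum>k=1..L. real k * (\<Sum>i=1..ls k. (bs ls idx (g::real^'n) k i)\<^sup>2) + (\<Sum>i=1..ls k. \<Sum>j=1..ls (k-1). (wt ls idx g k i j)\<^sup>2))
     \<le> real L * (norm g)\<^sup>2"
proof -
  have "(\<Sum>k=1..L. real k * (\<Sum>i=1..ls k. (bs ls idx g k i)\<^sup>2) + (\<Sum>i=1..ls k. \<Sum>j=1..ls (k-1). (wt ls idx g k i j)\<^sup>2))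
     \<le> (\<Sum>k=1..L. real L * tl2 ls idx g k)"
  proof (rule sum_mono)
    fix k assume k: "k \<in> {1..L}"
    have a: "real k * (\<Sum>i=1..ls k. (bs ls idx g k i)\<^sup>2) \<le> real L * (\<Sum>i=1..ls k. (bs ls idx g k i)\<^sup>2)"
      using k by (intro mult_right_mono) (auto intro: sum_nonneg)
    have b: "(\<Sum>i=1..ls k. \<Sum>j=1..ls (k-1). (wt ls idx g k i j)\<^sup>2) \<le> real L * (\<Sum>i=1..ls k. \<Sum>j=1..ls (k-1). (wt ls idx g k i j)\<^sup>2)"
    proof -
      have "(\<Sum>i=1..ls k. \<Sum>j=1..ls (k-1). (wt ls idx g k i j)\<^sup>2) \<ge> 0" by (auto intro!: sum_nonneg)
      moreover have "real L \<ge> 1" using k by auto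
      ultimately have "1 * (\<Sum>i=1..ls k. \<Sum>j=1..ls (k-1). (wt ls idx g k i j)\<^sup>2) \<le> real L * (\<Sum>i=1..ls k. \<Sum>j=1..ls (k-1). (wt ls idx g k i j)\<^sup>2)"
        by (intro mult_right_mono) auto
      then show ?thesis by simp
    qed
    show "real k * (\<Sum>i=1..ls k. (bs ls idx g k i)\<^sup>2) + (\<Sum>i=1..ls k. \<Sum>j=1..ls (k-1). (wt ls idx g k i j)\<^sup>2)
       \<le> real L * tl2 ls idx g k" using a b unfolding tl2_def by (simp add: algebra_simps)
  qed
  also have "\<dots> = real L * (norm g)\<^sup>2" by (simp add: norm_sq_layers[OF bij] sum_distrib_left)
  finally show ?thesis .
qed

lemma norm_le_V:
  assumes bij: "bij_betw idx {1..dd ls L} (UNIV :: 'n::finite set)" and L: "L \<ge> 1"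
  shows "(norm (\<theta>::real^'n))\<^sup>2 \<le> 2 * Vfun ls L idx \<xi> \<theta> + 4 * (real L)\<^sup>2 * (\<Sum>i=1..ls L. (\<xi> i)\<^sup>2)"
proof -
  have n: "(norm \<theta>)\<^sup>2 = (\<Sum>k=1..L. tl2 ls idx \<theta> k)" by (rule norm_sq_layers[OF bij])
  have split: "{1..L} = insert L {1..L-1}" using L by auto
  have "2 * Vfun ls L idx \<xi> \<theta> + 4 * (real L)\<^sup>2 * (\<Sum>i=1..ls L. (\<xi> i)\<^sup>2) - (norm \<theta>)\<^sup>2
     = (\<Sum>k=1..L. (2 * real k - 1) * (\<Sum>i=1..ls k. (bs ls idx \<theta> k i)\<^sup>2) + (\<Sum>i=1..ls k. \<Sum>j=1..ls (k-1). (wt ls idx \<theta> k i j)\<^sup>2))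
       - 4 * real L * (\<Sum>i=1..ls L. \<xi> i * bs ls idx \<theta> L i) + 4 * (real L)\<^sup>2 * (\<Sum>i=1..ls L. (\<xi> i)\<^sup>2)"
  proof -
    have "(\<Sum>k=1..L. (2 * real k - 1) * (\<Sum>i=1..ls k. (bs ls idx \<theta> k i)\<^sup>2) + (\<Sum>i=1..ls k. \<Sum>j=1..ls (k-1). (wt ls idx \<theta> k i j)\<^sup>2))
       = (\<Sum>k=1..L. 2 * (real k * (\<Sum>i=1..ls k. (bs ls idx \<theta> k i)\<^sup>2) + (\<Sum>i=1..ls k. \<Sum>j=1..ls (k-1). (wt ls idx \<theta> k i j)\<^sup>2)) - tl2 ls idx \<theta> k)"
      unfolding tl2_def by (intro sum.cong refl) (simp add: algebra_simps)
    also have "\<dots> = 2 * (\<Sum>k=1..L. real k * (\<Sum>i=1..ls k. (bs ls idx \<theta> k i)\<^sup>2) + (\<Sum>i=1..ls k. \<Sum>j=1..ls (k-1). (wt ls idx \<theta> k i j)\<^sup>2)) - (\<Sum>k=1..L. tl2 ls idx \<theta> k)"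
      by (simp only: sum_subtractf sum_distrib_left)
    finally show ?thesis unfolding Vfun_def n by (simp add: algebra_simps)
  qed
  also have "\<dots> \<ge> 0"
  proof -
    let ?f = "\<lambda>k. (2 * real k - 1) * (\<Sum>i=1..ls k. (bs ls idx \<theta> k i)\<^sup>2) + (\<Sum>i=1..ls k. \<Sum>j=1..ls (k-1). (wt ls idx \<theta> k i j)\<^sup>2)"
    have fk: "?f k \<ge> 0" if "k \<ge> 1" for k
      using that by (intro add_nonneg_nonneg mult_nonneg_nonneg sum_nonneg) auto
    have "(\<Sum>k=1..L. ?f k) \<ge> ?f L" using fk L by (intro member_le_sum) auto
    moreover have "?f L \<ge> (\<Sum>i=1..ls L. (bs ls idx \<theta> L i)\<^sup>2)"
    proof -
      have "(2 * real L - 1) * (\<Sum>i=1..ls L. (bs ls idx \<theta> L i)\<^sup>2) \<ge> 1 * (\<Sum>i=1..ls L. (bs ls idx \<theta> L i)\<^sup>2)"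
        using L by (intro mult_right_mono) (auto intro: sum_nonneg)
      moreover have "(\<Sum>i=1..ls L. \<Sum>j=1..ls (L-1). (wt ls idx \<theta> L i j)\<^sup>2) \<ge> 0" by (auto intro!: sum_nonneg)
      ultimately show ?thesis by simp
    qed
    moreover have "(\<Sum>i=1..ls L. (bs ls idx \<theta> L i)\<^sup>2) - 4 * real L * (\<Sum>i=1..ls L. \<xi> i * bs ls idx \<theta> L i)
        + 4 * (real L)\<^sup>2 * (\<Sum>i=1..ls L. (\<xi> i)\<^sup>2) = (\<Sum>i=1..ls L. (bs ls idx \<theta> L i - 2 * real L * \<xi> i)\<^sup>2)"
      by (simp add: power2_diff sum.distrib sum_subtractf sum_distrib_left algebra_simps power_mult_distrib)
    moreover have "(\<Sum>i=1..ls L. (bs ls idx \<theta> L i - 2 * real L * \<xi> i)\<^sup>2) \<ge> 0" by (auto intro: sum_nonneg)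
    ultimately show ?thesis by linarith
  qed
  finally show ?thesis by simp
qed


lemma vec_nth_meas: "(\<lambda>x::real^'m. x $ c) \<in> borel_measurable borel"
  by (intro borel_measurable_continuous_onI continuous_intros)

lemma net_meas:
  assumes "\<forall>k. act k \<in> borel_measurable borel"
  shows "(\<lambda>x. net ls idx idx0 act \<theta> k x i) \<in> borel_measurable borel"
proof (induction k arbitrary: i rule: nat_less_induct)
  case (1 k)
  show ?case
  proof (cases k)
    case 0 then show ?thesis by simp
  next
    case (Suc k')
    show ?thesis
    proof (cases k')
      case 0
      then show ?thesis using Suc vec_nth_meas by simp
    next
      case (Suc k'')
      have ih: "(\<lambda>x. net ls idx idx0 act \<theta> (Suc k'') x j) \<in> borel_measurable borel" for j
        using 1 \<open>k = Suc k'\<close> Suc by simp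
      have "(\<lambda>x. act (Suc k'') (net ls idx idx0 act \<theta> (Suc k'') x j)) \<in> borel_measurable borel" for j
        using measurable_compose[OF ih assms[rule_format]] by simp
      then show ?thesis using \<open>k = Suc k'\<close> Suc by simp
    qed
  qed
qed

lemma Dnet_meas:
  assumes "\<forall>k. act k \<in> borel_measurable borel" "\<forall>k. act' k \<in> borel_measurable borel"
  shows "(\<lambda>x. Dnet ls idx idx0 act act' \<theta> k x h i) \<in> borel_measurable borel"
proof (induction k arbitrary: i rule: nat_less_induct)
  case (1 k)
  show ?case
  proof (cases k)
    case 0 then show ?thesis by simp
  next
    case (Suc k')
    show ?thesis
    proof (cases k')
      case 0
      then show ?thesis using Suc vec_nth_meas by simp
    next
      case (Suc k'')
      have ih: "(\<lambda>x. Dnet ls idx idx0 act act' \<theta> (Suc k'') x h j) \<in> borel_measurable borel" for j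
        using 1 \<open>k = Suc k'\<close> Suc by simp
      have n: "(\<lambda>x. net ls idx idx0 act \<theta> (Suc k'') x j) \<in> borel_measurable borel" for j
        by (rule net_meas[OF assms(1)])
      have "(\<lambda>x. act (Suc k'') (net ls idx idx0 act \<theta> (Suc k'') x j)) \<in> borel_measurable borel" for j
        using measurable_compose[OF n assms(1)[rule_format]] by simp
      moreover have "(\<lambda>x. act' (Suc k'') (net ls idx idx0 act \<theta> (Suc k'') x j)) \<in> borel_measurable borel" for j
        using measurable_compose[OF n assms(2)[rule_format]] by simp
      ultimately show ?thesis using \<open>k = Suc k'\<close> Suc ih by simp
    qed
  qed
qed

lemma Dnet_lin:
  "Dnet ls idx idx0 act act' \<theta> k x (a *\<^sub>R h + b *\<^sub>R h') i
     = a * Dnet ls idx idx0 act act' \<theta> k x h i + b * Dnet ls idx idx0 act act' \<theta> k x h' i"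
proof (induction k arbitrary: i rule: nat_less_induct)
  case (1 k)
  show ?case
  proof (cases k)
    case 0 then show ?thesis by simp
  next
    case (Suc k')
    show ?thesis
    proof (cases k')
      case 0
      then show ?thesis using Suc
        by (simp add: bs_add bs_scale wt_add wt_scale algebra_simps sum.distrib sum_distrib_left)
    next
      case (Suc k'')
      have ih: "Dnet ls idx idx0 act act' \<theta> (Suc k'') x (a *\<^sub>R h + b *\<^sub>R h') j
         = a * Dnet ls idx idx0 act act' \<theta> (Suc k'') x h j + b * Dnet ls idx idx0 act act' \<theta> (Suc k'') x h' j" for j
        using 1 \<open>k = Suc k'\<close> Suc by simp
      show ?thesis using \<open>k = Suc k'\<close> Suc
        by (simp add: ih bs_add bs_scale wt_add wt_scale algebra_simps sum.distrib sum_distrib_left)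
    qed
  qed
qed

lemma bs_has_derivative: "((\<lambda>\<theta>. bs ls idx \<theta> k i) has_derivative (\<lambda>h. bs ls idx h k i)) F"
  unfolding bs_def by (rule bounded_linear_imp_has_derivative[OF bounded_linear_vec_nth])

lemma wt_has_derivative: "((\<lambda>\<theta>. wt ls idx \<theta> k i j) has_derivative (\<lambda>h. wt ls idx h k i j)) F"
  unfolding wt_def by (rule bounded_linear_imp_has_derivative[OF bounded_linear_vec_nth])

lemma net_deriv:
  fixes \<theta>0 :: "real^'n"
  assumes d: "\<forall>k y. (act k has_real_derivative act' k y) (at y)"
  shows "((\<lambda>\<theta>. net ls idx idx0 act \<theta> k x i) has_derivative (\<lambda>h. Dnet ls idx idx0 act act' \<theta>0 k x h i)) (at \<theta>0)"
proof (induction k arbitrary: i rule: nat_less_induct)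
  case (1 k)
  show ?case
  proof (cases k)
    case 0 then show ?thesis by (simp add: has_derivative_const)
  next
    case (Suc k')
    show ?thesis
    proof (cases k')
      case 0
      have "((\<lambda>\<theta>. bs ls idx \<theta> 1 i + (\<Sum>j=1..ls 0. wt ls idx \<theta> 1 i j * x $ idx0 j)) has_derivative
            (\<lambda>h. bs ls idx h 1 i + (\<Sum>j=1..ls 0. wt ls idx h 1 i j * x $ idx0 j))) (at \<theta>0)"
        by (intro has_derivative_add has_derivative_sum has_derivative_mult_left bs_has_derivative wt_has_derivative)
      then show ?thesis using Suc 0 by simp
    next
      case (Suc k'')
      let ?K = "Suc k''"
      have ih: "((\<lambda>\<theta>. net ls idx idx0 act \<theta> ?K x j) has_derivative (\<lambda>h. Dnet ls idx idx0 act act' \<theta>0 ?K x h j)) (at \<theta>0)" for j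
        using 1 \<open>k = Suc k'\<close> Suc by simp
      have ca: "((\<lambda>\<theta>. act ?K (net ls idx idx0 act \<theta> ?K x j)) has_derivative
              (\<lambda>h. Dnet ls idx idx0 act act' \<theta>0 ?K x h j * act' ?K (net ls idx idx0 act \<theta>0 ?K x j))) (at \<theta>0)" for j
        by (rule DERIV_compose_FDERIV[OF d[rule_format] ih])
      have "((\<lambda>\<theta>. bs ls idx \<theta> (Suc ?K) i + (\<Sum>j=1..ls ?K. wt ls idx \<theta> (Suc ?K) i j * act ?K (net ls idx idx0 act \<theta> ?K x j)))
         has_derivative
          (\<lambda>h. bs ls idx h (Suc ?K) i + (\<Sum>j=1..ls ?K. wt ls idx \<theta>0 (Suc ?K) i j * (Dnet ls idx idx0 act act' \<theta>0 ?K x h j * act' ?K (net ls idx idx0 act \<theta>0 ?K x j))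
               + wt ls idx h (Suc ?K) i j * act ?K (net ls idx idx0 act \<theta>0 ?K x j)))) (at \<theta>0)"
        by (intro has_derivative_add has_derivative_sum has_derivative_mult bs_has_derivative wt_has_derivative ca)
      then show ?thesis using \<open>k = Suc k'\<close> Suc by (simp add: algebra_simps)
    qed
  qed
qed

lemma err_deriv:
  fixes \<theta>0 :: "real^'n"
  assumes d: "\<forall>k y. (act k has_real_derivative act' k y) (at y)"
  shows "((\<lambda>\<theta>. err ls L idx idx0 act f \<theta> x) has_derivative
     (\<lambda>h. \<Sum>i=1..ls L. 2 * (net ls idx idx0 act \<theta>0 L x i - f x i) * Dnet ls idx idx0 act act' \<theta>0 L x h i)) (at \<theta>0)"
proof -
  have "((\<lambda>\<theta>. \<Sum>i=1..ls L. (net ls idx idx0 act \<theta> L x i - f x i) * (net ls idx idx0 act \<theta> L x i - f x i)) has_derivative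
     (\<lambda>h. \<Sum>i=1..ls L. (net ls idx idx0 act \<theta>0 L x i - f x i) * (Dnet ls idx idx0 act act' \<theta>0 L x h i - 0)
          + (Dnet ls idx idx0 act act' \<theta>0 L x h i - 0) * (net ls idx idx0 act \<theta>0 L x i - f x i))) (at \<theta>0)"
    by (intro has_derivative_sum has_derivative_mult has_derivative_diff net_deriv[OF d] has_derivative_const)
  then show ?thesis unfolding err_def by (simp add: power2_eq_square algebra_simps)
qed


lemma integral_has_derivative:
  fixes F :: "real^'n \<Rightarrow> 'a \<Rightarrow> real" and D :: "real^'n \<Rightarrow> 'a \<Rightarrow> real^'n \<Rightarrow> real"
  assumes fin: "finite_measure M"
    and int: "\<And>\<theta>. integrable M (F \<theta>)"
    and Dmeas: "\<And>h. (\<lambda>x. D \<theta>0 x h) \<in> borel_measurable M"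
    and der: "\<And>x \<theta>. x \<in> space M \<Longrightarrow> ((\<lambda>\<theta>. F \<theta> x) has_derivative D \<theta> x) (at \<theta>)"
    and bnd: "\<And>x \<theta> h. x \<in> space M \<Longrightarrow> \<theta> \<in> cball \<theta>0 1 \<Longrightarrow> \<bar>D \<theta> x h\<bar> \<le> Bd * norm h"
  shows "((\<lambda>\<theta>. \<integral>x. F \<theta> x \<partial>M) has_derivative (\<lambda>h. \<integral>x. D \<theta>0 x h \<partial>M)) (at \<theta>0)"
proof -
  interpret finite_measure M by (rule fin)
  have lin: "linear (D \<theta> x)" if "x \<in> space M" for \<theta> x
    using der[OF that] has_derivative_linear by blast
  have Dint: "integrable M (\<lambda>x. D \<theta>0 x h)" for h
    using bnd[of _ \<theta>0 h] Dmeas[of h] by (intro integrable_const_bound[where B="Bd * norm h"]) auto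
  have BL: "bounded_linear (\<lambda>h. \<integral>x. D \<theta>0 x h \<partial>M)"
  proof -
    have "linear (\<lambda>h. \<integral>x. D \<theta>0 x h \<partial>M)"
    proof (rule linearI)
      fix h h' :: "real^'n" and c :: real
      have "(\<integral>x. D \<theta>0 x (h + h') \<partial>M) = (\<integral>x. D \<theta>0 x h + D \<theta>0 x h' \<partial>M)"
        by (rule Bochner_Integration.integral_cong) (auto simp: linear_add lin)
      also have "\<dots> = (\<integral>x. D \<theta>0 x h \<partial>M) + (\<integral>x. D \<theta>0 x h' \<partial>M)" using Dint by simp
      finally show "(\<integral>x. D \<theta>0 x (h + h') \<partial>M) = (\<integral>x. D \<theta>0 x h \<partial>M) + (\<integral>x. D \<theta>0 x h' \<partial>M)" .
      have "(\<integral>x. D \<theta>0 x (c *\<^sub>R h) \<partial>M) = (\<integral>x. c * D \<theta>0 x h \<partial>M)"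
        by (rule Bochner_Integration.integral_cong) (auto simp: linear_scale lin)
      then show "(\<integral>x. D \<theta>0 x (c *\<^sub>R h) \<partial>M) = c *\<^sub>R (\<integral>x. D \<theta>0 x h \<partial>M)" by simp
    qed
    then show ?thesis by (simp add: linear_conv_bounded_linear)
  qed
  define Q where "Q h x = \<bar>F (\<theta>0 + h) x - F \<theta>0 x - D \<theta>0 x h\<bar> / norm h" for h x
  have Qbnd: "Q h x \<le> 2 * Bd" if "x \<in> space M" "norm h \<le> 1" "h \<noteq> 0" for h x
  proof -
    have "norm ((\<lambda>\<theta>. F \<theta> x) (\<theta>0 + h) - (\<lambda>\<theta>. F \<theta> x) \<theta>0 - D \<theta>0 x ((\<theta>0 + h) - \<theta>0)) \<le> norm ((\<theta>0 + h) - \<theta>0) * (2 * Bd)"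
    proof (rule differentiable_bound_linearization[where S="cball \<theta>0 1"])
      show "\<theta>0 + t *\<^sub>R (\<theta>0 + h - \<theta>0) \<in> cball \<theta>0 1" if "t \<in> {0..1}" for t
        using that \<open>norm h \<le> 1\<close> by (auto simp: dist_norm intro!: mult_le_one)
      show "((\<lambda>\<theta>. F \<theta> x) has_derivative D \<theta> x) (at \<theta> within cball \<theta>0 1)" for \<theta>
        using der[OF that(1)] by (rule has_derivative_at_withinI)
      show "onorm (D \<theta> x - D \<theta>0 x) \<le> 2 * Bd" if "\<theta> \<in> cball \<theta>0 1" for \<theta>
      proof (rule onorm_le)
        fix h'
        have "\<bar>D \<theta> x h' - D \<theta>0 x h'\<bar> \<le> \<bar>D \<theta> x h'\<bar> + \<bar>D \<theta>0 x h'\<bar>" by simp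
        also have "\<dots> \<le> Bd * norm h' + Bd * norm h'"
          using bnd[OF \<open>x \<in> space M\<close> that] bnd[OF \<open>x \<in> space M\<close>, of \<theta>0] by (intro add_mono) auto
        finally show "norm ((D \<theta> x - D \<theta>0 x) h') \<le> 2 * Bd * norm h'" by simp
      qed
      show "\<theta>0 \<in> cball \<theta>0 1" by simp
    qed
    then have "\<bar>F (\<theta>0 + h) x - F \<theta>0 x - D \<theta>0 x h\<bar> \<le> norm h * (2 * Bd)" by simp
    then show ?thesis unfolding Q_def using \<open>h \<noteq> 0\<close> by (simp add: divide_le_eq mult.commute)
  qed
  have "((\<lambda>h. norm ((\<integral>x. F (\<theta>0 + h) x \<partial>M) - (\<integral>x. F \<theta>0 x \<partial>M) - (\<integral>x. D \<theta>0 x h \<partial>M)) / norm h) \<longlongrightarrow> 0) (at 0)"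
  proof (subst tendsto_at_iff_sequentially, intro allI impI)
    fix X :: "nat \<Rightarrow> real^'n"
    assume X0: "\<forall>i. X i \<in> UNIV - {0}" and Xl: "X \<longlonglongrightarrow> 0"
    obtain N where N: "\<And>n. n \<ge> N \<Longrightarrow> norm (X n) \<le> 1"
      using Xl[THEN tendstoD, of 1] by (force simp: eventually_sequentially dist_norm less_imp_le)
    have intQ: "(\<lambda>n. \<integral>x. Q (X n) x \<partial>M) \<longlonglongrightarrow> 0"
    proof (rule LIMSEQ_offset[where k=N])
      have "(\<lambda>n. \<integral>x. Q (X (n + N)) x \<partial>M) \<longlonglongrightarrow> (\<integral>x. 0 \<partial>M)"
      proof (rule integral_dominated_convergence[where w="\<lambda>_. 2 * Bd"])
        show "(\<lambda>x. 0::real) \<in> borel_measurable M" by simp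
        show "(\<lambda>x. Q (X (n + N)) x) \<in> borel_measurable M" for n
          unfolding Q_def using int Dmeas by (intro borel_measurable_divide borel_measurable_abs borel_measurable_diff) auto
        show "integrable M (\<lambda>_. 2 * Bd)" by simp
        show "AE x in M. (\<lambda>n. Q (X (n + N)) x) \<longlonglongrightarrow> 0"
        proof (rule AE_I2)
          fix x assume x: "x \<in> space M"
          have "((\<lambda>h. norm (F (\<theta>0 + h) x - F \<theta>0 x - D \<theta>0 x h) / norm h) \<longlongrightarrow> 0) (at 0)"
            using der[OF x, of \<theta>0] by (simp add: has_derivative_at)
          then have "((\<lambda>h. norm (F (\<theta>0 + h) x - F \<theta>0 x - D \<theta>0 x h) / norm h) \<circ> (\<lambda>n. X (n + N))) \<longlonglongrightarrow> 0"
            using X0 Xl[THEN LIMSEQ_ignore_initial_segment, of N] by (simp add: tendsto_at_iff_sequentially)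
          then show "(\<lambda>n. Q (X (n + N)) x) \<longlonglongrightarrow> 0" by (simp add: Q_def o_def)
        qed
        show "AE x in M. norm (Q (X (n + N)) x) \<le> 2 * Bd" for n
        proof (rule AE_I2)
          fix x assume x: "x \<in> space M"
          have "Q (X (n + N)) x \<ge> 0" unfolding Q_def by simp
          then show "norm (Q (X (n + N)) x) \<le> 2 * Bd" using Qbnd[OF x N[of "n + N"]] X0 by auto
        qed
      qed
      then show "(\<lambda>n. \<integral>x. Q (X (n + N)) x \<partial>M) \<longlonglongrightarrow> 0" by simp
    qed
    show "((\<lambda>h. norm ((\<integral>x. F (\<theta>0 + h) x \<partial>M) - (\<integral>x. F \<theta>0 x \<partial>M) - (\<integral>x. D \<theta>0 x h \<partial>M)) / norm h) \<circ> X) \<longlonglongrightarrow> 0"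
    proof (rule Lim_null_comparison[OF _ intQ], rule always_eventually, intro allI)
      fix n
      let ?h = "X n"
      have "(\<integral>x. F (\<theta>0 + ?h) x \<partial>M) - (\<integral>x. F \<theta>0 x \<partial>M) - (\<integral>x. D \<theta>0 x ?h \<partial>M)
          = (\<integral>x. F (\<theta>0 + ?h) x - F \<theta>0 x - D \<theta>0 x ?h \<partial>M)"
        using int Dint by simp
      then have "norm ((\<integral>x. F (\<theta>0 + ?h) x \<partial>M) - (\<integral>x. F \<theta>0 x \<partial>M) - (\<integral>x. D \<theta>0 x ?h \<partial>M))
          \<le> (\<integral>x. \<bar>F (\<theta>0 + ?h) x - F \<theta>0 x - D \<theta>0 x ?h\<bar> \<partial>M)"
        using integral_norm_bound[of M "\<lambda>x. F (\<theta>0 + ?h) x - F \<theta>0 x - D \<theta>0 x ?h"] by simp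
      then have "norm ((\<integral>x. F (\<theta>0 + ?h) x \<partial>M) - (\<integral>x. F \<theta>0 x \<partial>M) - (\<integral>x. D \<theta>0 x ?h \<partial>M)) / norm ?h
          \<le> (\<integral>x. \<bar>F (\<theta>0 + ?h) x - F \<theta>0 x - D \<theta>0 x ?h\<bar> \<partial>M) / norm ?h"
        by (simp add: divide_right_mono)
      also have "\<dots> = (\<integral>x. Q ?h x \<partial>M)" unfolding Q_def by simp
      finally show "norm (((\<lambda>h. norm ((\<integral>x. F (\<theta>0 + h) x \<partial>M) - (\<integral>x. F \<theta>0 x \<partial>M) - (\<integral>x. D \<theta>0 x h \<partial>M)) / norm h) \<circ> X) n)
           \<le> (\<integral>x. Q (X n) x \<partial>M)" by simp
    qed
  qed
  then show ?thesis using BL by (simp add: has_derivative_at)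
qed


definition Rgood :: "(real \<Rightarrow> real \<Rightarrow> real) \<Rightarrow> real \<Rightarrow> real \<Rightarrow> real \<Rightarrow> bool" where
  "Rgood R AA BB C \<longleftrightarrow> 0 < AA \<and> AA < BB \<and> (\<forall>r\<ge>1. \<forall>x. R r differentiable (at x))
     \<and> (\<forall>r\<ge>1. \<forall>x. x \<le> AA / r \<longrightarrow> R r x = 0) \<and> (\<forall>r\<ge>1. \<forall>y. 0 \<le> R r y \<and> R r y \<le> max y 0)
     \<and> (\<forall>r\<ge>1. \<forall>z. z \<ge> BB / r \<longrightarrow> R r z = z) \<and> (\<forall>r\<ge>1. \<forall>x. \<bar>deriv (R r) x\<bar> \<le> C)"

lemma R_abs: assumes "Rgood R AA BB C" "s \<ge> 1" shows "\<bar>R s y\<bar> \<le> \<bar>y\<bar>"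
proof -
  have "0 \<le> R s y \<and> R s y \<le> max y 0" using assms unfolding Rgood_def by blast
  then show ?thesis by (cases "y \<le> 0") (auto simp: max_def)
qed

lemma R_C0: assumes "Rgood R AA BB C" shows "C \<ge> 0"
proof -
  have "\<bar>deriv (R 1) 0\<bar> \<le> C" using assms unfolding Rgood_def by blast
  then show ?thesis by linarith
qed

lemma R_deriv: assumes "Rgood R AA BB C" "s \<ge> 1" shows "(R s has_real_derivative deriv (R s) y) (at y)"
proof -
  have "R s differentiable (at y)" using assms unfolding Rgood_def by blast
  then show ?thesis by (simp add: DERIV_deriv_iff_real_differentiable)
qed

lemma R_lip: assumes "Rgood R AA BB C" "s \<ge> 1" shows "\<bar>R s a - R s b\<bar> \<le> C * \<bar>a - b\<bar>"
proof -
  have "norm (R s a - R s b) \<le> C * norm (a - b)"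
  proof (rule field_differentiable_bound[where S=UNIV and f'="deriv (R s)"])
    show "(R s has_field_derivative deriv (R s) z) (at z within UNIV)" for z
      using R_deriv[OF assms] by simp
    show "norm (deriv (R s) z) \<le> C" for z using assms unfolding Rgood_def by auto
  qed auto
  then show ?thesis by simp
qed

lemma R_relu: assumes "Rgood R AA BB C" "s \<ge> 1" shows "\<bar>R s b - max b 0\<bar> \<le> BB / s"
proof -
  have bnd: "0 \<le> R s b" "R s b \<le> max b 0" and id: "b \<ge> BB / s \<Longrightarrow> R s b = b"
    using assms unfolding Rgood_def by auto
  have BB0: "BB > 0" using assms unfolding Rgood_def by auto
  have "BB / s > 0" using BB0 assms by simp
  show ?thesis
  proof (cases "b \<ge> BB / s")
    case True then show ?thesis using id \<open>BB / s > 0\<close> by simp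
  next
    case False
    then show ?thesis using bnd \<open>BB / s > 0\<close> by (auto simp: max_def)
  qed
qed

lemma R_deriv_one: assumes "Rgood R AA BB C" "s \<ge> 1" "a > BB / s" shows "deriv (R s) a = 1"
proof -
  have "((\<lambda>y. y) has_real_derivative 1) (at a)" by (rule DERIV_ident)
  then have "(R s has_real_derivative 1) (at a)"
    by (rule has_field_derivative_transform_within_open[where S="{BB / s<..}"])
       (use assms in \<open>auto simp: Rgood_def\<close>)
  then show ?thesis by (rule DERIV_imp_deriv)
qed

lemma R_deriv_zero: assumes "Rgood R AA BB C" "s \<ge> 1" "a < AA / s" shows "deriv (R s) a = 0"
proof -
  have "((\<lambda>y. 0) has_real_derivative 0) (at a)" by (rule DERIV_const)
  then have "(R s has_real_derivative 0) (at a)"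
    by (rule has_field_derivative_transform_within_open[where S="{..<AA / s}"])
       (use assms in \<open>auto simp: Rgood_def\<close>)
  then show ?thesis by (rule DERIV_imp_deriv)
qed

lemma powr_ge1: "r \<ge> 1 \<Longrightarrow> r powr (1 / real k) \<ge> (1::real)"
  by (rule ge_one_powr_ge_zero) auto

lemma act_r_abs: "Rgood R AA BB C \<Longrightarrow> r \<ge> 1 \<Longrightarrow> \<bar>act_r R r k y\<bar> \<le> \<bar>y\<bar>"
  unfolding act_r_def by (rule R_abs[OF _ powr_ge1])

lemma dact_abs: assumes "Rgood R AA BB C" "r \<ge> 1" shows "\<bar>deriv (R (r powr (1 / real k))) y\<bar> \<le> C"
proof -
  have "\<forall>r\<ge>1. \<forall>x. \<bar>deriv (R r) x\<bar> \<le> C" using assms(1) unfolding Rgood_def by blast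
  then show ?thesis using powr_ge1[OF assms(2)] by blast
qed

lemma act_r_deriv: "Rgood R AA BB C \<Longrightarrow> r \<ge> 1 \<Longrightarrow>
   (act_r R r k has_real_derivative deriv (R (r powr (1 / real k))) y) (at y)"
  unfolding act_r_def by (rule R_deriv[OF _ powr_ge1])

lemma act_inf_abs: "\<bar>act_inf k y\<bar> \<le> \<bar>y\<bar>" by (simp add: act_inf_def)
lemma relu'_abs: "\<bar>relu' k y\<bar> \<le> 1" by (simp add: relu'_def)

lemma net_rate:
  assumes RG: "Rgood R AA BB C"
  shows "\<exists>K. \<forall>r\<ge>1. \<bar>net ls idx idx0 (act_r R r) \<theta> (Suc k) x i - net ls idx idx0 act_inf \<theta> (Suc k) x i\<bar>
            \<le> K * r powr (- 1 / real k)"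
proof (induction k arbitrary: i)
  case 0
  show ?case by (rule exI[of _ 0]) simp
next
  case (Suc k)
  have C0: "C \<ge> 0" by (rule R_C0[OF RG])
  have "\<forall>j. \<exists>K. \<forall>r\<ge>1. \<bar>net ls idx idx0 (act_r R r) \<theta> (Suc k) x j - net ls idx idx0 act_inf \<theta> (Suc k) x j\<bar>
            \<le> K * r powr (- 1 / real k)" using Suc.IH by blast
  then obtain Kf where Kf: "\<And>j r. r \<ge> 1 \<Longrightarrow> \<bar>net ls idx idx0 (act_r R r) \<theta> (Suc k) x j - net ls idx idx0 act_inf \<theta> (Suc k) x j\<bar>
            \<le> Kf j * r powr (- 1 / real k)" by metis
  define K where "K = (\<Sum>j=1..ls (Suc k). \<bar>wt ls idx \<theta> (Suc (Suc k)) i j\<bar> * (C * \<bar>Kf j\<bar> + BB))"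
  show ?case
  proof (intro exI allI impI)
    fix r :: real assume r: "r \<ge> 1"
    let ?e = "r powr (- 1 / real (Suc k))"
    have e0: "?e > 0" using r by simp
    have tm: "\<bar>act_r R r (Suc k) (net ls idx idx0 (act_r R r) \<theta> (Suc k) x j) - act_inf (Suc k) (net ls idx idx0 act_inf \<theta> (Suc k) x j)\<bar>
        \<le> (C * \<bar>Kf j\<bar> + BB) * ?e" for j
    proof -
      let ?a = "net ls idx idx0 (act_r R r) \<theta> (Suc k) x j" and ?b = "net ls idx idx0 act_inf \<theta> (Suc k) x j"
      define s' where "s' = r powr (1 / real (Suc k))"
      have s'1: "s' \<ge> 1" unfolding s'_def using powr_ge1[OF r] .
      have ab: "\<bar>?a - ?b\<bar> \<le> \<bar>Kf j\<bar> * ?e"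
      proof (cases k)
        case 0
        then show ?thesis using e0 by simp
      next
        case (Suc k0)
        have mono: "r powr (- 1 / real k) \<le> ?e"
          using r Suc by (intro powr_mono) (auto simp: field_simps)
        have "\<bar>?a - ?b\<bar> \<le> Kf j * r powr (- 1 / real k)" by (rule Kf[OF r])
        also have "\<dots> \<le> \<bar>Kf j\<bar> * r powr (- 1 / real k)" by (simp add: mult_right_mono)
        also have "\<dots> \<le> \<bar>Kf j\<bar> * ?e" using mono by (simp add: mult_left_mono)
        finally show ?thesis .
      qed
      have "\<bar>R s' ?a - max ?b 0\<bar> \<le> \<bar>R s' ?a - R s' ?b\<bar> + \<bar>R s' ?b - max ?b 0\<bar>" by simp
      also have "\<dots> \<le> C * \<bar>?a - ?b\<bar> + BB / s'"
        using R_lip[OF RG s'1] R_relu[OF RG s'1] by (rule add_mono)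
      also have "C * \<bar>?a - ?b\<bar> \<le> C * (\<bar>Kf j\<bar> * ?e)" using ab C0 by (simp add: mult_left_mono)
      also have "BB / s' = BB * ?e" unfolding s'_def by (simp add: powr_minus_divide)
      finally show ?thesis unfolding act_r_def act_inf_def s'_def by (simp add: algebra_simps)
    qed
    have "\<bar>net ls idx idx0 (act_r R r) \<theta> (Suc (Suc k)) x i - net ls idx idx0 act_inf \<theta> (Suc (Suc k)) x i\<bar>
        = \<bar>\<Sum>j=1..ls (Suc k). wt ls idx \<theta> (Suc (Suc k)) i j * (act_r R r (Suc k) (net ls idx idx0 (act_r R r) \<theta> (Suc k) x j) - act_inf (Suc k) (net ls idx idx0 act_inf \<theta> (Suc k) x j))\<bar>"
      by (simp add: sum_subtractf right_diff_distrib)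
    also have "\<dots> \<le> (\<Sum>j=1..ls (Suc k). \<bar>wt ls idx \<theta> (Suc (Suc k)) i j\<bar> * ((C * \<bar>Kf j\<bar> + BB) * ?e))"
    proof (rule order_trans[OF sum_abs], rule sum_mono)
      fix j
      show "\<bar>wt ls idx \<theta> (Suc (Suc k)) i j * (act_r R r (Suc k) (net ls idx idx0 (act_r R r) \<theta> (Suc k) x j) - act_inf (Suc k) (net ls idx idx0 act_inf \<theta> (Suc k) x j))\<bar>
         \<le> \<bar>wt ls idx \<theta> (Suc (Suc k)) i j\<bar> * ((C * \<bar>Kf j\<bar> + BB) * ?e)"
        unfolding abs_mult by (rule mult_left_mono[OF tm abs_ge_zero])
    qed
    also have "\<dots> = K * ?e" unfolding K_def sum_distrib_right by (intro sum.cong refl) (simp add: mult_ac)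
    finally show "\<bar>net ls idx idx0 (act_r R r) \<theta> (Suc (Suc k)) x i - net ls idx idx0 act_inf \<theta> (Suc (Suc k)) x i\<bar> \<le> K * ?e" .
  qed
qed


lemma powr_neg_tend: "k \<ge> 1 \<Longrightarrow> ((\<lambda>r::real. r powr (- 1 / real k)) \<longlongrightarrow> 0) at_top"
  by (rule tendsto_neg_powr) (auto intro: filterlim_ident)

lemma net_tend:
  assumes RG: "Rgood R AA BB C"
  shows "((\<lambda>r. net ls idx idx0 (act_r R r) \<theta> k x i) \<longlongrightarrow> net ls idx idx0 act_inf \<theta> k x i) at_top"
proof (cases k)
  case 0 then show ?thesis by simp
next
  case (Suc k0)
  show ?thesis
  proof (cases k0)
    case 0 then show ?thesis using Suc by simp
  next
    case (Suc k1)
    obtain K where K: "\<And>r. r \<ge> 1 \<Longrightarrow> \<bar>net ls idx idx0 (act_r R r) \<theta> (Suc k0) x i - net ls idx idx0 act_inf \<theta> (Suc k0) x i\<bar>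
              \<le> K * r powr (- 1 / real k0)" using net_rate[OF RG] by blast
    have "((\<lambda>r. net ls idx idx0 (act_r R r) \<theta> (Suc k0) x i - net ls idx idx0 act_inf \<theta> (Suc k0) x i) \<longlongrightarrow> 0) at_top"
    proof (rule Lim_null_comparison)
      show "\<forall>\<^sub>F r in at_top. norm (net ls idx idx0 (act_r R r) \<theta> (Suc k0) x i - net ls idx idx0 act_inf \<theta> (Suc k0) x i) \<le> K * r powr (- 1 / real k0)"
        using eventually_ge_at_top[of "1::real"] by eventually_elim (use K in auto)
      show "((\<lambda>r. K * r powr (- 1 / real k0)) \<longlongrightarrow> 0) at_top"
        using tendsto_mult_right_zero[OF powr_neg_tend[of k0]] Suc by simp
    qed
    then show ?thesis using \<open>k = Suc k0\<close> by (simp add: LIM_zero_cancel)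
  qed
qed

lemma act_tend:
  assumes RG: "Rgood R AA BB C" and k: "k \<ge> 1"
  shows "((\<lambda>r. act_r R r k (net ls idx idx0 (act_r R r) \<theta> k x j)) \<longlongrightarrow> act_inf k (net ls idx idx0 act_inf \<theta> k x j)) at_top"
proof -
  let ?a = "\<lambda>r. net ls idx idx0 (act_r R r) \<theta> k x j" and ?b = "net ls idx idx0 act_inf \<theta> k x j"
  have C0: "C \<ge> 0" by (rule R_C0[OF RG])
  have bnd: "\<bar>act_r R r k (?a r) - act_inf k ?b\<bar> \<le> C * \<bar>?a r - ?b\<bar> + BB * r powr (- 1 / real k)" if r: "r \<ge> 1" for r
  proof -
    define s where "s = r powr (1 / real k)"
    have s1: "s \<ge> 1" unfolding s_def using powr_ge1[OF r] .
    have "\<bar>R s (?a r) - max ?b 0\<bar> \<le> \<bar>R s (?a r) - R s ?b\<bar> + \<bar>R s ?b - max ?b 0\<bar>" by simp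
    also have "\<dots> \<le> C * \<bar>?a r - ?b\<bar> + BB / s"
      using R_lip[OF RG s1] R_relu[OF RG s1] by (rule add_mono)
    also have "BB / s = BB * r powr (- 1 / real k)" unfolding s_def by (simp add: powr_minus_divide)
    finally show ?thesis unfolding act_r_def act_inf_def s_def by simp
  qed
  have "((\<lambda>r. act_r R r k (?a r) - act_inf k ?b) \<longlongrightarrow> 0) at_top"
  proof (rule Lim_null_comparison)
    show "\<forall>\<^sub>F r in at_top. norm (act_r R r k (?a r) - act_inf k ?b) \<le> C * \<bar>?a r - ?b\<bar> + BB * r powr (- 1 / real k)"
      using eventually_ge_at_top[of "1::real"] by eventually_elim (use bnd in auto)
    have "((\<lambda>r. ?a r - ?b) \<longlongrightarrow> ?b - ?b) at_top" by (intro tendsto_diff net_tend[OF RG] tendsto_const)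
    then have "((\<lambda>r. ?a r - ?b) \<longlongrightarrow> 0) at_top" by simp
    then have "((\<lambda>r. C * \<bar>?a r - ?b\<bar>) \<longlongrightarrow> 0) at_top"
      using tendsto_mult_right_zero tendsto_rabs_zero by blast
    moreover have "((\<lambda>r. BB * r powr (- 1 / real k)) \<longlongrightarrow> 0) at_top"
      using tendsto_mult_right_zero[OF powr_neg_tend[OF k]] by simp
    ultimately show "((\<lambda>r. C * \<bar>?a r - ?b\<bar> + BB * r powr (- 1 / real k)) \<longlongrightarrow> 0) at_top"
      using tendsto_add_zero by blast
  qed
  then show ?thesis by (rule LIM_zero_cancel)
qed

lemma dact_tend:
  assumes RG: "Rgood R AA BB C" and k: "k \<ge> 1"
  shows "((\<lambda>r. deriv (R (r powr (1 / real k))) (net ls idx idx0 (act_r R r) \<theta> k x j)) \<longlongrightarrow> relu' k (net ls idx idx0 act_inf \<theta> k x j)) at_top"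
proof -
  let ?a = "\<lambda>r. net ls idx idx0 (act_r R r) \<theta> k x j" and ?\<nu> = "net ls idx idx0 act_inf \<theta> k x j"
  let ?s = "\<lambda>r::real. r powr (1 / real k)"
  have AA0: "AA > 0" and BB0: "BB > 0" using RG unfolding Rgood_def by auto
  have atend: "(?a \<longlongrightarrow> ?\<nu>) at_top" by (rule net_tend[OF RG])
  have sinv: "BB / ?s r = BB * r powr (- 1 / real k)" "AA / ?s r = AA * r powr (- 1 / real k)" for r
    by (simp_all add: powr_minus_divide)
  consider "?\<nu> > 0" | "?\<nu> < 0" | "?\<nu> = 0" by linarith
  then show ?thesis
  proof cases
    case 1
    have "((\<lambda>r. ?a r - BB * r powr (- 1 / real k)) \<longlongrightarrow> ?\<nu> - BB * 0) at_top"
      by (intro tendsto_intros atend powr_neg_tend k)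
    then have lim: "((\<lambda>r. ?a r - BB * r powr (- 1 / real k)) \<longlongrightarrow> ?\<nu>) at_top" by simp
    have "\<forall>\<^sub>F r in at_top. 0 < ?a r - BB * r powr (- 1 / real k)" by (rule order_tendstoD(1)[OF lim 1])
    then have "\<forall>\<^sub>F r in at_top. deriv (R (?s r)) (?a r) = 1"
      using eventually_ge_at_top[of "1::real"]
      by eventually_elim (auto intro!: R_deriv_one[OF RG powr_ge1] simp: sinv)
    then show ?thesis using 1 by (simp add: relu'_def tendsto_eventually)
  next
    case 2
    have "\<forall>\<^sub>F r in at_top. ?a r < 0" using atend 2 by (simp add: order_tendstoD)
    then have "\<forall>\<^sub>F r in at_top. deriv (R (?s r)) (?a r) = 0"
      using eventually_ge_at_top[of "1::real"]
    proof eventually_elim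
      case (elim r)
      have "AA / ?s r > 0" using AA0 elim by simp
      then show ?case using elim by (intro R_deriv_zero[OF RG powr_ge1]) auto
    qed
    then show ?thesis using 2 by (simp add: relu'_def tendsto_eventually)
  next
    case 3
    obtain k' where k': "k = Suc k'" using k by (cases k) auto
    have "\<forall>\<^sub>F r in at_top. ?a r < AA / ?s r"
    proof (cases k')
      case 0
      have "?a r = ?\<nu>" for r using k' 0 by simp
      show ?thesis
      proof (rule eventually_at_top_linorderI[of 1])
        fix r :: real assume "1 \<le> r"
        then show "?a r < AA / ?s r" using 3 AA0 \<open>\<And>r. ?a r = ?\<nu>\<close> by simp
      qed
    next
      case (Suc k'')
      obtain K where K: "\<And>r. r \<ge> 1 \<Longrightarrow> \<bar>?a r - ?\<nu>\<bar> \<le> K * r powr (- 1 / real (Suc k''))"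
        using net_rate[OF RG, of ls idx idx0 \<theta> k' x j] k' Suc by auto
      define e where "e = - 1 / real (Suc k'') + 1 / real (Suc k')"
      have "1 / real (Suc k') < 1 / real (Suc k'')" using Suc by (intro frac_less2) auto
      then have e0: "e < 0" unfolding e_def by simp
      have "((\<lambda>r. \<bar>K\<bar> * r powr e) \<longlongrightarrow> 0) at_top"
        using tendsto_mult_right_zero[OF tendsto_neg_powr[OF e0 filterlim_ident]] by simp
      then have "\<forall>\<^sub>F r in at_top. \<bar>K\<bar> * r powr e < AA" using AA0 by (simp add: order_tendstoD)
      then show ?thesis using eventually_ge_at_top[of "1::real"]
      proof eventually_elim
        case (elim r)
        have r0: "r > 0" using elim by simp
        have "?a r \<le> \<bar>?a r - ?\<nu>\<bar>" using 3 by simp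
        also have "\<dots> \<le> K * r powr (- 1 / real (Suc k''))" using K elim by simp
        also have "\<dots> \<le> \<bar>K\<bar> * r powr (- 1 / real (Suc k''))" by (simp add: mult_right_mono)
        also have "r powr (- 1 / real (Suc k'')) = r powr e * r powr (- 1 / real k)"
          unfolding e_def k' by (simp add: powr_add[symmetric])
        also have "\<bar>K\<bar> * (r powr e * r powr (- 1 / real k)) < AA * r powr (- 1 / real k)"
          using elim r0 by (simp add: mult.assoc[symmetric])
        also have "\<dots> = AA / ?s r" by (simp add: sinv)
        finally show ?case .
      qed
    qed
    then have "\<forall>\<^sub>F r in at_top. deriv (R (?s r)) (?a r) = 0"
      using eventually_ge_at_top[of "1::real"]
      by eventually_elim (auto intro!: R_deriv_zero[OF RG powr_ge1])
    then show ?thesis using 3 by (simp add: relu'_def tendsto_eventually)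
  qed
qed

lemma Dnet_tend:
  assumes RG: "Rgood R AA BB C"
  shows "((\<lambda>r. Dnet ls idx idx0 (act_r R r) (\<lambda>k. deriv (R (r powr (1 / real k)))) \<theta> k x h i)
           \<longlongrightarrow> Dnet ls idx idx0 act_inf relu' \<theta> k x h i) at_top"
proof (induction k arbitrary: i rule: nat_less_induct)
  case (1 k)
  show ?case
  proof (cases k)
    case 0 then show ?thesis by simp
  next
    case (Suc k')
    show ?thesis
    proof (cases k')
      case 0
      then show ?thesis using Suc by simp
    next
      case (Suc k'')
      have ih: "((\<lambda>r. Dnet ls idx idx0 (act_r R r) (\<lambda>k. deriv (R (r powr (1 / real k)))) \<theta> (Suc k'') x h j)
           \<longlongrightarrow> Dnet ls idx idx0 act_inf relu' \<theta> (Suc k'') x h j) at_top" for j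
        using 1 \<open>k = Suc k'\<close> Suc by simp
      show ?thesis unfolding \<open>k = Suc k'\<close> Suc Dnet.simps
        by (intro tendsto_intros ih act_tend[OF RG] dact_tend[OF RG]) auto
    qed
  qed
qed


lemma abs_sum_le_sqrt:
  fixes e d :: "nat \<Rightarrow> real"
  shows "\<bar>\<Sum>i\<in>I. e i * d i\<bar> \<le> sqrt ((\<Sum>i\<in>I. (e i)\<^sup>2) * (\<Sum>i\<in>I. (d i)\<^sup>2))"
  using Cauchy_Schwarz_ineq_sum[of e d I] by (simp add: real_le_rsqrt)

lemma grad_bound:
  fixes \<theta> h :: "real^'n" and x :: "real^'m" and act act' :: "nat \<Rightarrow> real \<Rightarrow> real"
  assumes bij: "bij_betw idx {1..dd ls L} (UNIV :: 'n set)" and L: "L \<ge> 1"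
    and act_le: "\<forall>k y. \<bar>act k y\<bar> \<le> \<bar>y\<bar>" and act'_le: "\<forall>k y. \<bar>act' k y\<bar> \<le> C"
    and X: "1 + (\<Sum>j=1..ls 0. (x $ idx0 j)\<^sup>2) \<le> Xb"
    and F: "(\<Sum>i=1..ls L. (f x i)\<^sup>2) \<le> Fb"
    and rho: "norm \<theta> \<le> \<rho>"
  shows "\<bar>\<Sum>i=1..ls L. 2 * (net ls idx idx0 act \<theta> L x i - f x i) * Dnet ls idx idx0 act act' \<theta> L x h i\<bar>
     \<le> 2 * sqrt ((2 * (1 + \<rho>\<^sup>2) ^ L * Xb + 2 * Fb) * (real L * (max 1 (C\<^sup>2)) ^ (L - 1) * (1 + \<rho>\<^sup>2) ^ (L - 1) * Xb)) * norm h"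
proof -
  let ?X = "1 + (\<Sum>j=1..ls 0. (x $ idx0 j)\<^sup>2)"
  let ?N = "\<lambda>i. net ls idx idx0 act \<theta> L x i" and ?D = "\<lambda>i. Dnet ls idx idx0 act act' \<theta> L x h i"
  define T where "T = \<rho>\<^sup>2"
  have T0: "T \<ge> 0" unfolding T_def by simp
  have X0: "?X \<ge> 0" by (auto intro!: add_nonneg_nonneg sum_nonneg)
  have Tk: "\<forall>k\<in>{1..L}. tl2 ls idx \<theta> k \<le> T"
  proof
    fix k assume "k \<in> {1..L}"
    then have "tl2 ls idx \<theta> k \<le> (norm \<theta>)\<^sup>2" by (rule tl2_le_norm[OF bij])
    also have "\<dots> \<le> T" unfolding T_def using rho norm_ge_zero by (intro power_mono) auto
    finally show "tl2 ls idx \<theta> k \<le> T" .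
  qed
  have LL: "L \<in> {1..L}" using L by simp
  define E where "E = 2 * (1 + \<rho>\<^sup>2) ^ L * Xb + 2 * Fb"
  define \<Phi> where "\<Phi> = real L * (max 1 (C\<^sup>2)) ^ (L - 1) * (1 + \<rho>\<^sup>2) ^ (L - 1) * Xb"
  have EN: "(\<Sum>i=1..ls L. (?N i - f x i)\<^sup>2) \<le> E"
  proof -
    have "(\<Sum>i=1..ls L. (?N i - f x i)\<^sup>2) \<le> (\<Sum>i=1..ls L. 2 * (?N i)\<^sup>2 + 2 * (f x i)\<^sup>2)"
    proof (rule sum_mono)
      fix i
      have "0 \<le> (?N i + f x i)\<^sup>2" by simp
      then show "(?N i - f x i)\<^sup>2 \<le> 2 * (?N i)\<^sup>2 + 2 * (f x i)\<^sup>2"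
        by (simp add: power2_eq_square algebra_simps)
    qed
    also have "\<dots> = 2 * (\<Sum>i=1..ls L. (?N i)\<^sup>2) + 2 * (\<Sum>i=1..ls L. (f x i)\<^sup>2)"
      by (simp add: sum.distrib sum_distrib_left)
    also have "(\<Sum>i=1..ls L. (?N i)\<^sup>2) \<le> (1 + T) ^ L * ?X"
      using net_bound[OF act_le Tk LL, of idx0 x] by simp
    also have "\<dots> \<le> (1 + T) ^ L * Xb" using X T0 by (intro mult_left_mono) auto
    finally show ?thesis unfolding E_def T_def using F by simp
  qed
  have DN: "(\<Sum>i=1..ls L. (?D i)\<^sup>2) \<le> (norm h)\<^sup>2 * \<Phi>"
  proof -
    have "(\<Sum>i=1..ls L. (?D i)\<^sup>2) \<le> (\<Sum>j=1..L. tl2 ls idx h j) * real L * (max 1 (C\<^sup>2)) ^ (L - 1) * (1 + T) ^ (L - 1) * ?X"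
      by (rule Dnet_bound[OF act_le act'_le Tk LL])
    also have "\<dots> \<le> (\<Sum>j=1..L. tl2 ls idx h j) * real L * (max 1 (C\<^sup>2)) ^ (L - 1) * (1 + T) ^ (L - 1) * Xb"
      using X T0 by (intro mult_left_mono) (auto intro!: mult_nonneg_nonneg sum_nonneg tl2_nonneg)
    also have "(\<Sum>j=1..L. tl2 ls idx h j) = (norm h)\<^sup>2" by (rule norm_sq_layers[OF bij, symmetric])
    finally show ?thesis unfolding \<Phi>_def T_def by (simp add: mult_ac)
  qed
  have E0: "0 \<le> (\<Sum>i=1..ls L. (?N i - f x i)\<^sup>2)" by (auto intro: sum_nonneg)
  have D0: "0 \<le> (\<Sum>i=1..ls L. (?D i)\<^sup>2)" by (auto intro: sum_nonneg)
  have "\<bar>\<Sum>i=1..ls L. 2 * (?N i - f x i) * ?D i\<bar> = 2 * \<bar>\<Sum>i=1..ls L. (?N i - f x i) * ?D i\<bar>"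
  proof -
    have "(\<Sum>i=1..ls L. 2 * (?N i - f x i) * ?D i) = 2 * (\<Sum>i=1..ls L. (?N i - f x i) * ?D i)"
      by (simp only: sum_distrib_left mult.assoc)
    then show ?thesis by (simp only: abs_mult)
  qed
  also have "\<dots> \<le> 2 * sqrt ((\<Sum>i=1..ls L. (?N i - f x i)\<^sup>2) * (\<Sum>i=1..ls L. (?D i)\<^sup>2))"
    using abs_sum_le_sqrt by simp
  also have "\<dots> \<le> 2 * sqrt (E * ((norm h)\<^sup>2 * \<Phi>))"
    using EN DN E0 D0 by (simp add: mult_mono)
  also have "\<dots> = 2 * sqrt (E * \<Phi>) * norm h"
    by (simp add: real_sqrt_mult mult_ac)
  finally show ?thesis unfolding E_def \<Phi>_def .
qed


locale nnset =
  fixes L :: nat and ls :: "nat \<Rightarrow> nat" and a b AA BB C :: real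
    and idx :: "nat \<Rightarrow> 'n::finite" and idx0 :: "nat \<Rightarrow> 'm::finite"
    and R :: "real \<Rightarrow> real \<Rightarrow> real" and \<mu> :: "(real^'m) measure" and f :: "real^'m \<Rightarrow> nat \<Rightarrow> real"
  assumes L_pos: "L \<ge> 1"
    and idx_bij: "bij_betw idx {1..dd ls L} (UNIV :: 'n set)"
    and RG: "Rgood R AA BB C"
    and Rcont: "\<forall>r\<ge>1. continuous_on UNIV (deriv (R r))"
    and \<mu>_sets: "sets \<mu> = sets (restrict_space borel (cbox (\<chi> _. a) (\<chi> _. b)))"
    and \<mu>_fin: "emeasure \<mu> (space \<mu>) \<noteq> \<infinity>"
    and f_meas: "\<forall>i\<in>{1..ls L}. (\<lambda>x. f x i) \<in> borel_measurable borel"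
    and int_r: "\<forall>r\<ge>1. \<forall>\<theta>. integrable \<mu> (err ls L idx idx0 (act_r R r) f \<theta>)"
    and int_inf: "\<forall>\<theta>. integrable \<mu> (err ls L idx idx0 act_inf f \<theta>)"
    and f_const: "\<forall>x\<in>cbox (\<chi> _. a) (\<chi> _. b). \<forall>i\<in>{1..ls L}. f x i = f 0 i"
begin

definition "Xb = 1 + real (ls 0) * (max \<bar>a\<bar> \<bar>b\<bar>)\<^sup>2"
definition "Fb = (\<Sum>i=1..ls L. (f 0 i)\<^sup>2)"
definition "dact r = (\<lambda>k. deriv (R (r powr (1 / real k))))"

lemma space_mu: "space \<mu> = cbox (\<chi> _. a) (\<chi> _. b)"
  using sets_eq_imp_space_eq[OF \<mu>_sets] by (simp add: space_restrict_space)

lemma fin: "finite_measure \<mu>"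
  using \<mu>_fin by (intro finite_measureI) auto

lemma meas_mu: "g \<in> borel_measurable borel \<Longrightarrow> g \<in> borel_measurable \<mu>"
  unfolding measurable_cong_sets[OF \<mu>_sets refl] by (rule measurable_restrict_space1)

lemma X_bound: assumes "x \<in> space \<mu>" shows "1 + (\<Sum>j=1..ls 0. (x $ idx0 j)\<^sup>2) \<le> Xb"
proof -
  have "(x $ c)\<^sup>2 \<le> (max \<bar>a\<bar> \<bar>b\<bar>)\<^sup>2" for c
  proof -
    have "a \<le> x $ c" "x $ c \<le> b" using assms unfolding space_mu mem_box_cart(2) by auto
    then have "\<bar>x $ c\<bar> \<le> max \<bar>a\<bar> \<bar>b\<bar>" by linarith
    then show ?thesis by (simp add: abs_le_square_iff[symmetric])
  qed
  then have "(\<Sum>j=1..ls 0. (x $ idx0 j)\<^sup>2) \<le> (\<Sum>j=1..ls 0. (max \<bar>a\<bar> \<bar>b\<bar>)\<^sup>2)" by (intro sum_mono) auto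
  then show ?thesis unfolding Xb_def by simp
qed

lemma F_eq: assumes "x \<in> space \<mu>" shows "(\<Sum>i=1..ls L. (f x i)\<^sup>2) = Fb"
  unfolding Fb_def using f_const assms space_mu by (intro sum.cong) auto

lemma act_r_meas: "r \<ge> 1 \<Longrightarrow> act_r R r k \<in> borel_measurable borel"
proof -
  assume r: "r \<ge> 1"
  have "\<forall>x. R (r powr (1 / real k)) differentiable (at x)" using RG powr_ge1[OF r] unfolding Rgood_def by blast
  then have "continuous_on UNIV (R (r powr (1 / real k)))"
    by (intro differentiable_imp_continuous_on) (simp add: differentiable_on_def differentiable_at_withinI)
  then show ?thesis unfolding act_r_def by (rule borel_measurable_continuous_onI)
qed

lemma dact_meas: "r \<ge> 1 \<Longrightarrow> dact r k \<in> borel_measurable borel"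
  unfolding dact_def using Rcont powr_ge1 by (intro borel_measurable_continuous_onI) blast

lemma act_inf_meas: "act_inf k \<in> borel_measurable borel"
  unfolding act_inf_def by (intro borel_measurable_continuous_onI continuous_intros)

lemma relu'_meas: "relu' k \<in> borel_measurable borel"
  unfolding relu'_def by measurable

lemma integrand_meas:
  assumes "\<forall>k. act k \<in> borel_measurable borel" "\<forall>k. act' k \<in> borel_measurable borel"
  shows "(\<lambda>x. \<Sum>i=1..ls L. 2 * (net ls idx idx0 act \<theta> L x i - f x i) * Dnet ls idx idx0 act act' \<theta> L x h i) \<in> borel_measurable \<mu>"
  using net_meas[OF assms(1)] Dnet_meas[OF assms] f_meas
  by (intro meas_mu borel_measurable_sum borel_measurable_times borel_measurable_diff) auto

lemma lossr_deriv:
  assumes r: "r \<ge> 1"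
  shows "(loss \<mu> ls L idx idx0 (act_r R r) f has_derivative
     (\<lambda>h. \<integral>x. (\<Sum>i=1..ls L. 2 * (net ls idx idx0 (act_r R r) \<theta>0 L x i - f x i) * Dnet ls idx idx0 (act_r R r) (dact r) \<theta>0 L x h i) \<partial>\<mu>)) (at \<theta>0)"
proof -
  have "((\<lambda>\<theta>. \<integral>x. err ls L idx idx0 (act_r R r) f \<theta> x \<partial>\<mu>) has_derivative
     (\<lambda>h. \<integral>x. (\<Sum>i=1..ls L. 2 * (net ls idx idx0 (act_r R r) \<theta>0 L x i - f x i) * Dnet ls idx idx0 (act_r R r) (dact r) \<theta>0 L x h i) \<partial>\<mu>)) (at \<theta>0)"
  proof (rule integral_has_derivative[OF fin, where Bd="2 * sqrt ((2 * (1 + (norm \<theta>0 + 1)\<^sup>2) ^ L * Xb + 2 * Fb) * (real L * (max 1 (C\<^sup>2)) ^ (L - 1) * (1 + (norm \<theta>0 + 1)\<^sup>2) ^ (L - 1) * Xb))"])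
    show "integrable \<mu> (\<lambda>x. err ls L idx idx0 (act_r R r) f \<theta> x)" for \<theta> using int_r r by simp
    show "(\<lambda>x. \<Sum>i=1..ls L. 2 * (net ls idx idx0 (act_r R r) \<theta>0 L x i - f x i) * Dnet ls idx idx0 (act_r R r) (dact r) \<theta>0 L x h i) \<in> borel_measurable \<mu>" for h
      using act_r_meas[OF r] dact_meas[OF r] by (intro integrand_meas) auto
    show "((\<lambda>\<theta>. err ls L idx idx0 (act_r R r) f \<theta> x) has_derivative
        (\<lambda>h. \<Sum>i=1..ls L. 2 * (net ls idx idx0 (act_r R r) \<theta> L x i - f x i) * Dnet ls idx idx0 (act_r R r) (dact r) \<theta> L x h i)) (at \<theta>)" for x \<theta>
      unfolding dact_def using act_r_deriv[OF RG r] by (intro err_deriv) auto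
    show "\<bar>\<Sum>i=1..ls L. 2 * (net ls idx idx0 (act_r R r) \<theta> L x i - f x i) * Dnet ls idx idx0 (act_r R r) (dact r) \<theta> L x h i\<bar>
       \<le> 2 * sqrt ((2 * (1 + (norm \<theta>0 + 1)\<^sup>2) ^ L * Xb + 2 * Fb) * (real L * (max 1 (C\<^sup>2)) ^ (L - 1) * (1 + (norm \<theta>0 + 1)\<^sup>2) ^ (L - 1) * Xb)) * norm h"
      if x: "x \<in> space \<mu>" and th: "\<theta> \<in> cball \<theta>0 1" for x \<theta> h
    proof (rule grad_bound[OF idx_bij L_pos])
      show "\<forall>k y. \<bar>act_r R r k y\<bar> \<le> \<bar>y\<bar>" using act_r_abs[OF RG r] by blast
      show "\<forall>k y. \<bar>dact r k y\<bar> \<le> C" unfolding dact_def using dact_abs[OF RG r] by blast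
      show "1 + (\<Sum>j=1..ls 0. (x $ idx0 j)\<^sup>2) \<le> Xb" by (rule X_bound[OF x])
      show "(\<Sum>i=1..ls L. (f x i)\<^sup>2) \<le> Fb" using F_eq[OF x] by simp
      show "norm \<theta> \<le> norm \<theta>0 + 1" using th norm_triangle_sub[of \<theta> \<theta>0] by (auto simp: dist_norm norm_minus_commute)
    qed
  qed
  moreover have "loss \<mu> ls L idx idx0 (act_r R r) f = (\<lambda>\<theta>. \<integral>x. err ls L idx idx0 (act_r R r) f \<theta> x \<partial>\<mu>)"
    by (rule ext) (simp add: loss_def)
  ultimately show ?thesis by simp
qed


lemma lossr_limit:
  "((\<lambda>r. \<integral>x. (\<Sum>i=1..ls L. 2 * (net ls idx idx0 (act_r R r) \<theta> L x i - f x i) * Dnet ls idx idx0 (act_r R r) (dact r) \<theta> L x h i) \<partial>\<mu>)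
     \<longlongrightarrow> (\<integral>x. (\<Sum>i=1..ls L. 2 * (net ls idx idx0 act_inf \<theta> L x i - f x i) * Dnet ls idx idx0 act_inf relu' \<theta> L x h i) \<partial>\<mu>)) at_top"
proof -
  define S where "S t x = (\<Sum>i=1..ls L. 2 * (net ls idx idx0 (act_r R (max t 1)) \<theta> L x i - f x i) * Dnet ls idx idx0 (act_r R (max t 1)) (dact (max t 1)) \<theta> L x h i)" for t x
  define F where "F x = (\<Sum>i=1..ls L. 2 * (net ls idx idx0 act_inf \<theta> L x i - f x i) * Dnet ls idx idx0 act_inf relu' \<theta> L x h i)" for x
  define W where "W = 2 * sqrt ((2 * (1 + (norm \<theta>)\<^sup>2) ^ L * Xb + 2 * Fb) * (real L * (max 1 (C\<^sup>2)) ^ (L - 1) * (1 + (norm \<theta>)\<^sup>2) ^ (L - 1) * Xb)) * norm h"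
  have "((\<lambda>t. integral\<^sup>L \<mu> (S t)) \<longlongrightarrow> integral\<^sup>L \<mu> F) at_top"
  proof (rule integral_dominated_convergence_at_top[where w="\<lambda>_. W"])
    show "F \<in> borel_measurable \<mu>" unfolding F_def using act_inf_meas relu'_meas by (intro integrand_meas) auto
    show "S t \<in> borel_measurable \<mu>" for t
      unfolding S_def using act_r_meas[of "max t 1"] dact_meas[of "max t 1"] by (intro integrand_meas) auto
    show "integrable \<mu> (\<lambda>_. W)" using fin by (simp add: finite_measure.integrable_const)
    show "AE x in \<mu>. ((\<lambda>t. S t x) \<longlongrightarrow> F x) at_top"
    proof (rule AE_I2)
      fix x
      have "((\<lambda>r. \<Sum>i=1..ls L. 2 * (net ls idx idx0 (act_r R r) \<theta> L x i - f x i) * Dnet ls idx idx0 (act_r R r) (dact r) \<theta> L x h i) \<longlongrightarrow> F x) at_top"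
        unfolding F_def dact_def by (intro tendsto_intros net_tend[OF RG] Dnet_tend[OF RG])
      moreover have "\<forall>\<^sub>F t in at_top. (\<Sum>i=1..ls L. 2 * (net ls idx idx0 (act_r R t) \<theta> L x i - f x i) * Dnet ls idx idx0 (act_r R t) (dact t) \<theta> L x h i) = S t x"
        using eventually_ge_at_top[of "1::real"] by eventually_elim (simp add: S_def max_def)
      ultimately show "((\<lambda>t. S t x) \<longlongrightarrow> F x) at_top" by (rule Lim_transform_eventually)
    qed
    show "\<forall>\<^sub>F t in at_top. AE x in \<mu>. norm (S t x) \<le> W"
    proof (rule always_eventually, intro allI AE_I2)
      fix t :: real and x assume x: "x \<in> space \<mu>"
      have r: "max t 1 \<ge> 1" by simp
      show "norm (S t x) \<le> W" unfolding S_def W_def real_norm_def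
      proof (rule grad_bound[OF idx_bij L_pos])
        show "\<forall>k y. \<bar>act_r R (max t 1) k y\<bar> \<le> \<bar>y\<bar>" using act_r_abs[OF RG r] by blast
        show "\<forall>k y. \<bar>dact (max t 1) k y\<bar> \<le> C" unfolding dact_def using dact_abs[OF RG r] by blast
        show "1 + (\<Sum>j=1..ls 0. (x $ idx0 j)\<^sup>2) \<le> Xb" by (rule X_bound[OF x])
        show "(\<Sum>i=1..ls L. (f x i)\<^sup>2) \<le> Fb" using F_eq[OF x] by simp
        show "norm \<theta> \<le> norm \<theta>" by simp
      qed
    qed
  qed
  moreover have "\<forall>\<^sub>F t in at_top. integral\<^sup>L \<mu> (S t) = (\<integral>x. (\<Sum>i=1..ls L. 2 * (net ls idx idx0 (act_r R t) \<theta> L x i - f x i) * Dnet ls idx idx0 (act_r R t) (dact t) \<theta> L x h i) \<partial>\<mu>)"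
    using eventually_ge_at_top[of "1::real"]
  proof eventually_elim
    case (elim t)
    have "S t = (\<lambda>x. \<Sum>i=1..ls L. 2 * (net ls idx idx0 (act_r R t) \<theta> L x i - f x i) * Dnet ls idx idx0 (act_r R t) (dact t) \<theta> L x h i)"
      using elim by (intro ext) (simp add: S_def max_def)
    then show ?case by simp
  qed
  ultimately show ?thesis unfolding F_def by (rule Lim_transform_eventually)
qed

lemma linear_repr:
  fixes g :: "real^'k \<Rightarrow> real"
  assumes "linear g"
  shows "g h = (\<chi> c. g (axis c 1)) \<bullet> h"
proof -
  have "g h = g (\<Sum>c\<in>UNIV. h$c *\<^sub>R axis c 1)" using basis_expansion[of h] by (simp add: scalar_mult_eq_scaleR)
  also have "\<dots> = (\<Sum>c\<in>UNIV. h$c * g (axis c 1))" using assms by (simp add: linear_sum linear_scale)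
  also have "\<dots> = (\<chi> c. g (axis c 1)) \<bullet> h" by (simp add: inner_vec_def mult.commute)
  finally show ?thesis .
qed

lemma G_eq:
  fixes G :: "real^'n \<Rightarrow> real^'n"
  assumes G_def: "\<forall>\<theta> g gs. (\<forall>r\<ge>1. (loss \<mu> ls L idx idx0 (act_r R r) f has_derivative (\<lambda>h. gs r \<bullet> h)) (at \<theta>))
                  \<and> (gs \<longlongrightarrow> g) at_top \<longrightarrow> G \<theta> = g"
  shows "G \<theta> \<bullet> h = (\<integral>x. (\<Sum>i=1..ls L. 2 * (net ls idx idx0 act_inf \<theta> L x i - f x i) * Dnet ls idx idx0 act_inf relu' \<theta> L x h i) \<partial>\<mu>)"
proof -
  define DLr where "DLr r h = (\<integral>x. (\<Sum>i=1..ls L. 2 * (net ls idx idx0 (act_r R r) \<theta> L x i - f x i) * Dnet ls idx idx0 (act_r R r) (dact r) \<theta> L x h i) \<partial>\<mu>)" for r h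
  define DL where "DL h = (\<integral>x. (\<Sum>i=1..ls L. 2 * (net ls idx idx0 act_inf \<theta> L x i - f x i) * Dnet ls idx idx0 act_inf relu' \<theta> L x h i) \<partial>\<mu>)" for h
  define gs where "gs r = (\<chi> c. DLr r (axis c 1))" for r
  define g where "g = (\<chi> c. DL (axis c 1))"
  have eq: "DLr r h' = gs r \<bullet> h'" if r: "r \<ge> 1" for r h'
  proof -
    have "linear (DLr r)" using lossr_deriv[OF r, of \<theta>] unfolding DLr_def
      by (metis (no_types, lifting) ext has_derivative_linear)
    then show ?thesis unfolding gs_def by (rule linear_repr)
  qed
  have der: "\<forall>r\<ge>1. (loss \<mu> ls L idx idx0 (act_r R r) f has_derivative (\<lambda>h. gs r \<bullet> h)) (at \<theta>)"
  proof (intro allI impI)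
    fix r :: real assume r: "r \<ge> 1"
    have "(\<lambda>h. gs r \<bullet> h) = DLr r" using eq[OF r] by auto
    then show "(loss \<mu> ls L idx idx0 (act_r R r) f has_derivative (\<lambda>h. gs r \<bullet> h)) (at \<theta>)"
      using lossr_deriv[OF r, of \<theta>] unfolding DLr_def by simp
  qed
  have lim: "((\<lambda>r. DLr r h') \<longlongrightarrow> DL h') at_top" for h'
    unfolding DLr_def DL_def by (rule lossr_limit)
  have "(gs \<longlongrightarrow> g) at_top" unfolding gs_def g_def by (intro tendsto_vec_lambda lim)
  then have Gg: "G \<theta> = g" using G_def der by blast
  have "((\<lambda>r. gs r \<bullet> h) \<longlongrightarrow> g \<bullet> h) at_top" by (intro tendsto_intros \<open>(gs \<longlongrightarrow> g) at_top\<close>)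
  moreover have "((\<lambda>r. gs r \<bullet> h) \<longlongrightarrow> DL h) at_top"
  proof -
    have ev: "\<forall>\<^sub>F r in at_top. DLr r h = gs r \<bullet> h"
      using eventually_ge_at_top[of "1::real"] by eventually_elim (rule eq)
    from lim[of h] ev show ?thesis by (rule Lim_transform_eventually)
  qed
  ultimately have "g \<bullet> h = DL h" by (rule tendsto_unique[rotated]) simp
  then show ?thesis unfolding Gg DL_def .
qed

end


lemma rl1:
  fixes Y A B :: real
  assumes "Y \<ge> 0" "A \<ge> 0" "B \<ge> 0" and h: "\<And>t. t > 0 \<Longrightarrow> Y \<le> t * A + B / t"
  shows "Y\<^sup>2 \<le> 4 * A * B"
proof (rule ccontr)
  assume c: "\<not> Y\<^sup>2 \<le> 4 * A * B"
  then have Y0: "Y > 0" using assms by (cases "Y = 0") auto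
  show False
  proof (cases "A = 0")
    case True
    have t0: "B / Y + 1 > 0" using Y0 assms by (simp add: add_nonneg_pos)
    have "Y \<le> B / (B / Y + 1)" using h[OF t0] True by simp
    also have "\<dots> < Y"
    proof -
      have "B < Y * (B / Y + 1)" using Y0 by (simp add: field_simps)
      then show ?thesis using t0 by (simp add: divide_less_eq mult.commute)
    qed
    finally show False by simp
  next
    case False
    then have A0: "A > 0" using assms by simp
    have t0: "Y / (2 * A) > 0" using Y0 A0 by simp
    have "Y \<le> Y / (2 * A) * A + B / (Y / (2 * A))" by (rule h[OF t0])
    also have "\<dots> = Y / 2 + 2 * A * B / Y" using A0 Y0 by (simp add: field_simps)
    also have "2 * A * B / Y < Y / 2"
    proof -
      have "4 * A * B < Y * Y" using c by (simp add: power2_eq_square)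
      then show ?thesis using Y0 by (simp add: field_simps)
    qed
    finally show False by simp
  qed
qed

lemma sq_split: "t > 0 \<Longrightarrow> (p + q)\<^sup>2 \<le> (1 + t) * p\<^sup>2 + (1 + 1 / t) * q\<^sup>2" for p q t :: real
proof -
  assume t: "t > 0"
  have "0 \<le> (t * p - q)\<^sup>2 / t" using t by simp
  also have "(t * p - q)\<^sup>2 / t = t * p\<^sup>2 - 2 * p * q + q\<^sup>2 / t"
    using t by (simp add: power2_eq_square field_simps)
  finally have "2 * p * q \<le> t * p\<^sup>2 + q\<^sup>2 / t" by simp
  then show ?thesis by (simp add: power2_sum algebra_simps)
qed

lemma two_mul_t: "t > 0 \<Longrightarrow> 2 * p * q \<le> t * p\<^sup>2 + (1 / t) * q\<^sup>2" for p q t :: real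
proof -
  assume t: "t > 0"
  have "0 \<le> (t * p - q)\<^sup>2 / t" using t by simp
  also have "(t * p - q)\<^sup>2 / t = t * p\<^sup>2 - 2 * p * q + q\<^sup>2 / t"
    using t by (simp add: power2_eq_square field_simps)
  finally show ?thesis by simp
qed

context nnset
begin

definition "Lo \<theta> = loss \<mu> ls L idx idx0 act_inf f \<theta>"
definition "DL \<theta> h = (\<integral>x. (\<Sum>i=1..ls L. 2 * (net ls idx idx0 act_inf \<theta> L x i - f x i) * Dnet ls idx idx0 act_inf relu' \<theta> L x h i) \<partial>\<mu>)"
definition "m = measure \<mu> (space \<mu>)"
definition "Sf \<theta> = real L * (1 + (norm \<theta>)\<^sup>2) ^ (L - 1) * Xb"

lemma m_nonneg: "m \<ge> 0" unfolding m_def by simp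

lemma Lo_nonneg: "Lo \<theta> \<ge> 0"
  unfolding Lo_def loss_def err_def by (intro integral_nonneg_AE AE_I2 sum_nonneg) auto

lemma Xb_nonneg: "Xb \<ge> 1" unfolding Xb_def by simp

lemma Dinf_bound:
  assumes x: "x \<in> space \<mu>"
  shows "(\<Sum>i=1..ls L. (Dnet ls idx idx0 act_inf relu' \<theta> L x h i)\<^sup>2) \<le> (norm h)\<^sup>2 * Sf \<theta>"
proof -
  let ?T = "(norm \<theta>)\<^sup>2"
  have Tk: "\<forall>k\<in>{1..L}. tl2 ls idx \<theta> k \<le> ?T" using tl2_le_norm[OF idx_bij] by blast
  have LL: "L \<in> {1..L}" using L_pos by simp
  have "(\<Sum>i=1..ls L. (Dnet ls idx idx0 act_inf relu' \<theta> L x h i)\<^sup>2)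
      \<le> (\<Sum>j=1..L. tl2 ls idx h j) * real L * (max 1 (1\<^sup>2)) ^ (L - 1) * (1 + ?T) ^ (L - 1) * (1 + (\<Sum>j=1..ls 0. (x $ idx0 j)\<^sup>2))"
    by (rule Dnet_bound[OF _ _ Tk LL]) (auto simp: act_inf_abs relu'_abs)
  also have "\<dots> \<le> (\<Sum>j=1..L. tl2 ls idx h j) * real L * (max 1 (1\<^sup>2)) ^ (L - 1) * (1 + ?T) ^ (L - 1) * Xb"
    using X_bound[OF x] by (intro mult_left_mono) (auto intro!: mult_nonneg_nonneg sum_nonneg tl2_nonneg)
  also have "(\<Sum>j=1..L. tl2 ls idx h j) = (norm h)\<^sup>2" by (rule norm_sq_layers[OF idx_bij, symmetric])
  finally show ?thesis unfolding Sf_def by (simp add: mult_ac)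
qed

lemma DL_integrable: "integrable \<mu> (\<lambda>x. \<Sum>i=1..ls L. 2 * (net ls idx idx0 act_inf \<theta> L x i - f x i) * Dnet ls idx idx0 act_inf relu' \<theta> L x h i)"
proof -
  interpret finite_measure \<mu> by (rule fin)
  show ?thesis
  proof (rule integrable_const_bound)
    show "(\<lambda>x. \<Sum>i=1..ls L. 2 * (net ls idx idx0 act_inf \<theta> L x i - f x i) * Dnet ls idx idx0 act_inf relu' \<theta> L x h i) \<in> borel_measurable \<mu>"
      using act_inf_meas relu'_meas by (intro integrand_meas) auto
    show "AE x in \<mu>. norm (\<Sum>i=1..ls L. 2 * (net ls idx idx0 act_inf \<theta> L x i - f x i) * Dnet ls idx idx0 act_inf relu' \<theta> L x h i)
       \<le> 2 * sqrt ((2 * (1 + (norm \<theta>)\<^sup>2) ^ L * Xb + 2 * Fb) * (real L * (max 1 (1\<^sup>2)) ^ (L - 1) * (1 + (norm \<theta>)\<^sup>2) ^ (L - 1) * Xb)) * norm h"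
    proof (rule AE_I2)
      fix x assume x: "x \<in> space \<mu>"
      show "norm (\<Sum>i=1..ls L. 2 * (net ls idx idx0 act_inf \<theta> L x i - f x i) * Dnet ls idx idx0 act_inf relu' \<theta> L x h i)
       \<le> 2 * sqrt ((2 * (1 + (norm \<theta>)\<^sup>2) ^ L * Xb + 2 * Fb) * (real L * (max 1 (1\<^sup>2)) ^ (L - 1) * (1 + (norm \<theta>)\<^sup>2) ^ (L - 1) * Xb)) * norm h"
        unfolding real_norm_def
      proof (rule grad_bound[OF idx_bij L_pos])
        show "1 + (\<Sum>j=1..ls 0. (x $ idx0 j)\<^sup>2) \<le> Xb" by (rule X_bound[OF x])
        show "(\<Sum>i=1..ls L. (f x i)\<^sup>2) \<le> Fb" using F_eq[OF x] by simp
      qed (auto simp: act_inf_abs relu'_abs)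
    qed
  qed
qed

lemma DL_le:
  assumes t: "t > 0"
  shows "DL \<theta> h \<le> t * Lo \<theta> + (1 / t) * (m * ((norm h)\<^sup>2 * Sf \<theta>))"
proof -
  let ?e = "\<lambda>x i. net ls idx idx0 act_inf \<theta> L x i - f x i"
  let ?D = "\<lambda>x i. Dnet ls idx idx0 act_inf relu' \<theta> L x h i"
  interpret finite_measure \<mu> by (rule fin)
  have "DL \<theta> h \<le> (\<integral>x. t * err ls L idx idx0 act_inf f \<theta> x + (1 / t) * ((norm h)\<^sup>2 * Sf \<theta>) \<partial>\<mu>)"
    unfolding DL_def
  proof (rule integral_mono)
    show "integrable \<mu> (\<lambda>x. \<Sum>i=1..ls L. 2 * ?e x i * ?D x i)" by (rule DL_integrable)
    show "integrable \<mu> (\<lambda>x. t * err ls L idx idx0 act_inf f \<theta> x + (1 / t) * ((norm h)\<^sup>2 * Sf \<theta>))"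
      using int_inf by simp
    fix x assume x: "x \<in> space \<mu>"
    have "(\<Sum>i=1..ls L. 2 * ?e x i * ?D x i) \<le> (\<Sum>i=1..ls L. t * (?e x i)\<^sup>2 + (1 / t) * (?D x i)\<^sup>2)"
      by (intro sum_mono two_mul_t t)
    also have "\<dots> = t * err ls L idx idx0 act_inf f \<theta> x + (1 / t) * (\<Sum>i=1..ls L. (?D x i)\<^sup>2)"
      unfolding err_def by (simp add: sum.distrib sum_distrib_left)
    also have "\<dots> \<le> t * err ls L idx idx0 act_inf f \<theta> x + (1 / t) * ((norm h)\<^sup>2 * Sf \<theta>)"
      using Dinf_bound[OF x] t by (intro add_left_mono mult_left_mono) auto
    finally show "(\<Sum>i=1..ls L. 2 * ?e x i * ?D x i) \<le> t * err ls L idx idx0 act_inf f \<theta> x + (1 / t) * ((norm h)\<^sup>2 * Sf \<theta>)" .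
  qed
  also have "\<dots> = t * Lo \<theta> + (1 / t) * (m * ((norm h)\<^sup>2 * Sf \<theta>))"
    using int_inf unfolding Lo_def loss_def m_def by (simp add: mult_ac)
  finally show ?thesis .
qed

lemma G_norm:
  fixes G :: "real^'n \<Rightarrow> real^'n"
  assumes G_def: "\<forall>\<theta> g gs. (\<forall>r\<ge>1. (loss \<mu> ls L idx idx0 (act_r R r) f has_derivative (\<lambda>h. gs r \<bullet> h)) (at \<theta>))
                  \<and> (gs \<longlongrightarrow> g) at_top \<longrightarrow> G \<theta> = g"
  shows "(norm (G \<theta>))\<^sup>2 \<le> 4 * m * Lo \<theta> * Sf \<theta>"
proof -
  let ?g = "G \<theta>"
  have Sf0: "Sf \<theta> \<ge> 0" unfolding Sf_def using Xb_nonneg by simp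
  have eq: "(norm ?g)\<^sup>2 = DL \<theta> ?g" using G_eq[OF G_def, of \<theta> ?g] unfolding DL_def by (simp add: power2_norm_eq_inner)
  have h: "(norm ?g)\<^sup>2 \<le> t * Lo \<theta> + (m * ((norm ?g)\<^sup>2 * Sf \<theta>)) / t" if "t > 0" for t
    using DL_le[OF that, of \<theta> ?g] eq by simp
  have "((norm ?g)\<^sup>2)\<^sup>2 \<le> 4 * Lo \<theta> * (m * ((norm ?g)\<^sup>2 * Sf \<theta>))"
    by (rule rl1[OF _ _ _ h]) (auto simp: Lo_nonneg m_nonneg Sf0)
  then have "(norm ?g)\<^sup>2 * (norm ?g)\<^sup>2 \<le> (4 * m * Lo \<theta> * Sf \<theta>) * (norm ?g)\<^sup>2"
    by (simp add: power2_eq_square mult_ac)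
  moreover have "(norm ?g)\<^sup>2 \<ge> 0" by simp
  ultimately show ?thesis
  proof (cases "norm ?g = 0")
    case True then show ?thesis using Lo_nonneg[of \<theta>] m_nonneg Sf0 by simp
  next
    case False
    then have "(norm ?g)\<^sup>2 > 0" by simp
    then show ?thesis by (rule mult_right_le_imp_le[OF \<open>(norm ?g)\<^sup>2 * (norm ?g)\<^sup>2 \<le> _\<close>])
  qed
qed

lemma DL_v:
  "DL \<theta> (vV ls L idx (f 0) \<theta>) = 4 * real L * Lo \<theta>"
proof -
  let ?v = "vV ls L idx (f 0) \<theta>"
  have hb: "\<forall>k\<in>{1..L}. \<forall>i\<in>{1..ls k}. bs ls idx ?v k i = 2 * real k * bs ls idx \<theta> k i + (if k = L then - 2 * real L * f 0 i else 0)"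
    using vV_bs[OF idx_bij] by simp
  have hw: "\<forall>k\<in>{1..L}. \<forall>i\<in>{1..ls k}. \<forall>j\<in>{1..ls (k-1)}. wt ls idx ?v k i j = 2 * wt ls idx \<theta> k i j"
    using vV_wt[OF idx_bij] by simp
  have D: "Dnet ls idx idx0 act_inf relu' \<theta> L x ?v i = 2 * real L * net ls idx idx0 act_inf \<theta> L x i - 2 * real L * f 0 i"
    if "i \<in> {1..ls L}" for x i
    using Dnet_hom[OF hb hw, of L i idx0 x] that L_pos by simp
  have "DL \<theta> ?v = (\<integral>x. 4 * real L * err ls L idx idx0 act_inf f \<theta> x \<partial>\<mu>)"
    unfolding DL_def
  proof (rule Bochner_Integration.integral_cong[OF refl])
    fix x assume x: "x \<in> space \<mu>"
    have fx: "f x i = f 0 i" if "i \<in> {1..ls L}" for i using f_const x space_mu that by auto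
    show "(\<Sum>i=1..ls L. 2 * (net ls idx idx0 act_inf \<theta> L x i - f x i) * Dnet ls idx idx0 act_inf relu' \<theta> L x ?v i)
        = 4 * real L * err ls L idx idx0 act_inf f \<theta> x"
      unfolding err_def sum_distrib_left
      by (intro sum.cong refl) (simp add: D fx power2_eq_square algebra_simps)
  qed
  also have "\<dots> = 4 * real L * Lo \<theta>" unfolding Lo_def loss_def by simp
  finally show ?thesis .
qed

end


fun Lam :: "real \<Rightarrow> real \<Rightarrow> nat \<Rightarrow> real" where
  "Lam \<rho> X 0 = 0"
| "Lam \<rho> X (Suc 0) = X"
| "Lam \<rho> X (Suc (Suc k)) = 2 * (1 + \<rho>\<^sup>2) ^ (Suc k) * X + 2 * \<rho>\<^sup>2 * Lam \<rho> X (Suc k)"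

lemma relu_lip: "(act_inf k a - act_inf k b)\<^sup>2 \<le> (a - b)\<^sup>2"
  unfolding act_inf_def by (simp add: abs_le_square_iff[symmetric] max_def)

lemma net_lip:
  fixes \<theta> \<theta>' :: "real^'n" and x :: "real^'m"
  assumes bij: "bij_betw idx {1..dd ls L} (UNIV :: 'n set)"
    and n1: "norm \<theta> \<le> \<rho>" and n2: "norm \<theta>' \<le> \<rho>"
    and X: "1 + (\<Sum>j=1..ls 0. (x $ idx0 j)\<^sup>2) \<le> Xb"
  shows "k \<in> {1..L} \<Longrightarrow> (\<Sum>i=1..ls k. (net ls idx idx0 act_inf \<theta>' k x i - net ls idx idx0 act_inf \<theta> k x i)\<^sup>2)
      \<le> Lam \<rho> Xb k * (norm (\<theta>' - \<theta>))\<^sup>2"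
proof (induction k)
  case 0 then show ?case by simp
next
  case (Suc k)
  let ?d = "\<theta>' - \<theta>"
  have Tk: "tl2 ls idx th j \<le> \<rho>\<^sup>2" if "j \<in> {1..L}" "norm th \<le> \<rho>" for th :: "real^'n" and j
  proof -
    have "tl2 ls idx th j \<le> (norm th)\<^sup>2" by (rule tl2_le_norm[OF bij that(1)])
    also have "\<dots> \<le> \<rho>\<^sup>2" using that(2) by (intro power_mono) auto
    finally show ?thesis .
  qed
  have dk: "tl2 ls idx ?d j \<le> (norm ?d)\<^sup>2" if "j \<in> {1..L}" for j by (rule tl2_le_norm[OF bij that])
  show ?case
  proof (cases k)
    case 0
    have "(\<Sum>i=1..ls 1. (net ls idx idx0 act_inf \<theta>' 1 x i - net ls idx idx0 act_inf \<theta> 1 x i)\<^sup>2)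
        = (\<Sum>i=1..ls 1. (bs ls idx ?d 1 i + (\<Sum>j=1..ls 0. wt ls idx ?d 1 i j * x $ idx0 j))\<^sup>2)"
      by (intro sum.cong refl arg_cong[where f="\<lambda>z. z\<^sup>2"]) (simp add: bs_diff wt_diff sum_subtractf left_diff_distrib algebra_simps)
    also have "\<dots> \<le> tl2 ls idx ?d 1 * (1 + (\<Sum>j=1..ls 0. (x $ idx0 j)\<^sup>2))"
      using layer_sq[of "\<lambda>i. bs ls idx ?d 1 i" "\<lambda>i j. wt ls idx ?d 1 i j" "\<lambda>j. x $ idx0 j" "{1..ls 0}" "{1..ls 1}"]
      by (simp add: tl2_def)
    also have "\<dots> \<le> (norm ?d)\<^sup>2 * Xb"
      using dk[of 1] Suc.prems 0 X tl2_nonneg[of ls idx ?d 1]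
      by (intro mult_mono) (auto intro!: add_nonneg_nonneg sum_nonneg)
    finally show ?thesis using 0 by (simp add: mult.commute)
  next
    case (Suc k')
    define K where "K = Suc k'"
    have kK: "k = K" using Suc K_def by simp
    have K1: "K \<in> {1..L}" "Suc K \<in> {1..L}" using Suc.prems kK K_def by auto
    let ?N' = "\<lambda>j. net ls idx idx0 act_inf \<theta>' K x j" and ?N = "\<lambda>j. net ls idx idx0 act_inf \<theta> K x j"
    define u where "u i = bs ls idx ?d (Suc K) i + (\<Sum>j=1..ls K. wt ls idx ?d (Suc K) i j * act_inf K (?N' j))" for i
    define v where "v i = (\<Sum>j=1..ls K. wt ls idx \<theta> (Suc K) i j * (act_inf K (?N' j) - act_inf K (?N j)))" for i
    have split: "net ls idx idx0 act_inf \<theta>' (Suc K) x i - net ls idx idx0 act_inf \<theta> (Suc K) x i = u i + v i" for i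
      unfolding u_def v_def K_def
      by (simp add: bs_diff wt_diff sum_subtractf[symmetric] sum.distrib[symmetric] algebra_simps)
    have IH: "(\<Sum>j=1..ls K. (?N' j - ?N j)\<^sup>2) \<le> Lam \<rho> Xb K * (norm ?d)\<^sup>2"
      using Suc.IH K1 kK by simp
    have U: "(\<Sum>i=1..ls (Suc K). (u i)\<^sup>2) \<le> (norm ?d)\<^sup>2 * ((1 + \<rho>\<^sup>2) ^ K * Xb)"
    proof -
      have "(\<Sum>i=1..ls (Suc K). (u i)\<^sup>2) \<le> tl2 ls idx ?d (Suc K) * (1 + (\<Sum>j=1..ls K. (act_inf K (?N' j))\<^sup>2))"
        using layer_sq[of "\<lambda>i. bs ls idx ?d (Suc K) i" "\<lambda>i j. wt ls idx ?d (Suc K) i j"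
          "\<lambda>j. act_inf K (?N' j)" "{1..ls K}" "{1..ls (Suc K)}"]
        unfolding u_def by (simp add: tl2_def)
      also have "\<dots> \<le> (norm ?d)\<^sup>2 * ((1 + \<rho>\<^sup>2) ^ K * Xb)"
      proof (rule mult_mono)
        show "tl2 ls idx ?d (Suc K) \<le> (norm ?d)\<^sup>2" by (rule dk[OF K1(2)])
        have "1 + (\<Sum>j=1..ls K. (act_inf K (?N' j))\<^sup>2) \<le> 1 + (\<Sum>j=1..ls K. (?N' j)\<^sup>2)"
          using act_sq_le[of act_inf K ?N' "{1..ls K}"] act_inf_abs by auto
        also have "\<dots> \<le> (1 + \<rho>\<^sup>2) ^ K * (1 + (\<Sum>j=1..ls 0. (x $ idx0 j)\<^sup>2))"
          by (rule net_bound[where K=L]) (use Tk n2 K1 act_inf_abs in auto)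
        also have "\<dots> \<le> (1 + \<rho>\<^sup>2) ^ K * Xb" using X by (intro mult_left_mono) auto
        finally show "1 + (\<Sum>j=1..ls K. (act_inf K (?N' j))\<^sup>2) \<le> (1 + \<rho>\<^sup>2) ^ K * Xb" .
      qed (auto intro!: add_nonneg_nonneg sum_nonneg)
      finally show ?thesis .
    qed
    have V: "(\<Sum>i=1..ls (Suc K). (v i)\<^sup>2) \<le> (norm ?d)\<^sup>2 * (\<rho>\<^sup>2 * Lam \<rho> Xb K)"
    proof -
      have "(\<Sum>i=1..ls (Suc K). (v i)\<^sup>2)
          \<le> (\<Sum>i=1..ls (Suc K). \<Sum>j=1..ls K. (wt ls idx \<theta> (Suc K) i j)\<^sup>2) * (\<Sum>j=1..ls K. (act_inf K (?N' j) - act_inf K (?N j))\<^sup>2)"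
        unfolding v_def by (rule mat_sq)
      also have "\<dots> \<le> \<rho>\<^sup>2 * (Lam \<rho> Xb K * (norm ?d)\<^sup>2)"
      proof (rule mult_mono)
        have "(\<Sum>i=1..ls (Suc K). \<Sum>j=1..ls (Suc K - 1). (wt ls idx \<theta> (Suc K) i j)\<^sup>2) \<le> tl2 ls idx \<theta> (Suc K)"
          unfolding tl2_def by (auto intro!: sum_nonneg)
        then show "(\<Sum>i=1..ls (Suc K). \<Sum>j=1..ls K. (wt ls idx \<theta> (Suc K) i j)\<^sup>2) \<le> \<rho>\<^sup>2"
          using Tk[OF K1(2) n1] by simp
        have "(\<Sum>j=1..ls K. (act_inf K (?N' j) - act_inf K (?N j))\<^sup>2) \<le> (\<Sum>j=1..ls K. (?N' j - ?N j)\<^sup>2)"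
          by (intro sum_mono relu_lip)
        then show "(\<Sum>j=1..ls K. (act_inf K (?N' j) - act_inf K (?N j))\<^sup>2) \<le> Lam \<rho> Xb K * (norm ?d)\<^sup>2"
          using IH by linarith
      qed (auto intro!: sum_nonneg)
      finally show ?thesis by (simp add: mult_ac)
    qed
    have "(\<Sum>i=1..ls (Suc K). (u i + v i)\<^sup>2) \<le> (\<Sum>i=1..ls (Suc K). 2 * (u i)\<^sup>2 + 2 * (v i)\<^sup>2)"
    proof (rule sum_mono)
      fix i
      have "0 \<le> (u i - v i)\<^sup>2" by simp
      then show "(u i + v i)\<^sup>2 \<le> 2 * (u i)\<^sup>2 + 2 * (v i)\<^sup>2" by (simp add: power2_eq_square algebra_simps)
    qed
    also have "\<dots> = 2 * (\<Sum>i=1..ls (Suc K). (u i)\<^sup>2) + 2 * (\<Sum>i=1..ls (Suc K). (v i)\<^sup>2)"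
      by (simp add: sum.distrib sum_distrib_left)
    also have "\<dots> \<le> 2 * ((norm ?d)\<^sup>2 * ((1 + \<rho>\<^sup>2) ^ K * Xb)) + 2 * ((norm ?d)\<^sup>2 * (\<rho>\<^sup>2 * Lam \<rho> Xb K))"
      using U V by linarith
    also have "\<dots> = Lam \<rho> Xb (Suc K) * (norm ?d)\<^sup>2" unfolding K_def by (simp add: algebra_simps)
    finally show ?thesis unfolding kK split .
  qed
qed

context nnset
begin

lemma Lo_change:
  fixes G :: "real^'n \<Rightarrow> real^'n"
  assumes n1: "norm \<theta> \<le> \<rho>" and n2: "norm \<theta>' \<le> \<rho>" and t: "t > 0"
  shows "Lo \<theta>' \<le> (1 + t) * Lo \<theta> + (1 + 1 / t) * (m * (Lam \<rho> Xb L * (norm (\<theta>' - \<theta>))\<^sup>2))"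
proof -
  interpret finite_measure \<mu> by (rule fin)
  have "Lo \<theta>' \<le> (\<integral>x. (1 + t) * err ls L idx idx0 act_inf f \<theta> x + (1 + 1 / t) * (Lam \<rho> Xb L * (norm (\<theta>' - \<theta>))\<^sup>2) \<partial>\<mu>)"
    unfolding Lo_def loss_def
  proof (rule integral_mono)
    show "integrable \<mu> (err ls L idx idx0 act_inf f \<theta>')" using int_inf by simp
    show "integrable \<mu> (\<lambda>x. (1 + t) * err ls L idx idx0 act_inf f \<theta> x + (1 + 1 / t) * (Lam \<rho> Xb L * (norm (\<theta>' - \<theta>))\<^sup>2))"
      using int_inf by simp
    fix x assume x: "x \<in> space \<mu>"
    let ?N' = "\<lambda>i. net ls idx idx0 act_inf \<theta>' L x i" and ?N = "\<lambda>i. net ls idx idx0 act_inf \<theta> L x i"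
    have "err ls L idx idx0 act_inf f \<theta>' x = (\<Sum>i=1..ls L. ((?N i - f x i) + (?N' i - ?N i))\<^sup>2)"
      unfolding err_def by simp
    also have "\<dots> \<le> (\<Sum>i=1..ls L. (1 + t) * (?N i - f x i)\<^sup>2 + (1 + 1 / t) * (?N' i - ?N i)\<^sup>2)"
      by (intro sum_mono sq_split t)
    also have "\<dots> = (1 + t) * err ls L idx idx0 act_inf f \<theta> x + (1 + 1 / t) * (\<Sum>i=1..ls L. (?N' i - ?N i)\<^sup>2)"
      unfolding err_def by (simp add: sum.distrib sum_distrib_left)
    also have "\<dots> \<le> (1 + t) * err ls L idx idx0 act_inf f \<theta> x + (1 + 1 / t) * (Lam \<rho> Xb L * (norm (\<theta>' - \<theta>))\<^sup>2)"
    proof -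
      have "(\<Sum>i=1..ls L. (?N' i - ?N i)\<^sup>2) \<le> Lam \<rho> Xb L * (norm (\<theta>' - \<theta>))\<^sup>2"
        by (rule net_lip[OF idx_bij n1 n2 X_bound[OF x]]) (use L_pos in simp)
      then show ?thesis using t by (intro add_left_mono mult_left_mono) auto
    qed
    finally show "err ls L idx idx0 act_inf f \<theta>' x \<le> (1 + t) * err ls L idx idx0 act_inf f \<theta> x + (1 + 1 / t) * (Lam \<rho> Xb L * (norm (\<theta>' - \<theta>))\<^sup>2)" .
  qed
  also have "\<dots> = (1 + t) * Lo \<theta> + (1 + 1 / t) * (m * (Lam \<rho> Xb L * (norm (\<theta>' - \<theta>))\<^sup>2))"
    using int_inf unfolding Lo_def loss_def m_def by (simp add: mult_ac)
  finally show ?thesis .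
qed

lemma V_GD:
  fixes G :: "real^'n \<Rightarrow> real^'n"
  assumes G_def: "\<forall>\<theta> g gs. (\<forall>r\<ge>1. (loss \<mu> ls L idx idx0 (act_r R r) f has_derivative (\<lambda>h. gs r \<bullet> h)) (at \<theta>))
                  \<and> (gs \<longlongrightarrow> g) at_top \<longrightarrow> G \<theta> = g"
  shows "Vfun ls L idx (f 0) (\<theta> - \<gamma> *\<^sub>R G \<theta>) \<le> Vfun ls L idx (f 0) \<theta> - \<gamma> * (4 * real L * Lo \<theta>) + \<gamma>\<^sup>2 * (real L * (norm (G \<theta>))\<^sup>2)"
proof -
  have gv: "G \<theta> \<bullet> vV ls L idx (f 0) \<theta> = 4 * real L * Lo \<theta>"
    using G_eq[OF G_def, of \<theta> "vV ls L idx (f 0) \<theta>"] DL_v[of \<theta>] unfolding DL_def by simp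
  have "\<gamma>\<^sup>2 * (\<Sum>k=1..L. real k * (\<Sum>i=1..ls k. (bs ls idx (G \<theta>) k i)\<^sup>2) + (\<Sum>i=1..ls k. \<Sum>j=1..ls (k-1). (wt ls idx (G \<theta>) k i j)\<^sup>2))
      \<le> \<gamma>\<^sup>2 * (real L * (norm (G \<theta>))\<^sup>2)"
    by (intro mult_left_mono Pg_le[OF idx_bij]) auto
  then show ?thesis unfolding V_step[OF idx_bij] gv by simp
qed

end


locale nngd = nnset L ls a b AA BB C idx idx0 R \<mu> f
  for L ls a b AA BB C and idx :: "nat \<Rightarrow> 'n::finite" and idx0 :: "nat \<Rightarrow> 'm::finite" and R \<mu> f +
  fixes G :: "real^'n \<Rightarrow> real^'n" and \<gamma> :: "nat \<Rightarrow> real" and \<Theta> :: "nat \<Rightarrow> real^'n" and B0 Kth :: real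
  assumes G_def: "\<forall>\<theta> g gs. (\<forall>r\<ge>1. (loss \<mu> ls L idx idx0 (act_r R r) f has_derivative (\<lambda>h. gs r \<bullet> h)) (at \<theta>))
                  \<and> (gs \<longlongrightarrow> g) at_top \<longrightarrow> G \<theta> = g"
    and \<gamma>_nonneg: "\<forall>n. \<gamma> n \<ge> 0"
    and \<Theta>_step: "\<forall>n. \<Theta> (Suc n) = \<Theta> n - \<gamma> n *\<^sub>R G (\<Theta> n)"
    and \<gamma>_div: "filterlim (\<lambda>N. \<Sum>n<N. \<gamma> n) at_top sequentially"
    and \<gamma>_bdd: "bdd_above (range (\<lambda>n. \<gamma> n * measure \<mu> (space \<mu>)))"
    and \<gamma>_lt: "(SUP n. \<gamma> n * measure \<mu> (space \<mu>)) * Kth < 1"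
    and B0_def: "B0 = 2 * Vfun ls L idx (f 0) (\<Theta> 0) + 4 * (real L)\<^sup>2 * (\<Sum>i=1..ls L. (f 0 i)\<^sup>2)"
    and Sf_le: "\<forall>\<theta>::real^'n. (norm \<theta>)\<^sup>2 \<le> B0 \<longrightarrow> real L * (1 + (norm \<theta>)\<^sup>2) ^ (L - 1) * (1 + real (ls 0) * (max \<bar>a\<bar> \<bar>b\<bar>)\<^sup>2) \<le> Kth"
    and Kth_pos: "Kth > 0"
begin

definition "s\<gamma> = (SUP n. \<gamma> n * m)"
definition "q = s\<gamma> * Kth"
definition "cc = 4 * real L * (1 - q)"

lemma Sf_le': "(norm (\<theta>::real^'n))\<^sup>2 \<le> B0 \<Longrightarrow> Sf \<theta> \<le> Kth"
  using Sf_le unfolding Sf_def Xb_def by blast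

lemma \<gamma>m_le: "\<gamma> n * m \<le> s\<gamma>"
  unfolding s\<gamma>_def m_def by (rule cSUP_upper[OF _ \<gamma>_bdd]) simp

lemma q_lt: "q < 1" using \<gamma>_lt unfolding q_def s\<gamma>_def m_def .

lemma s\<gamma>_nonneg: "s\<gamma> \<ge> 0"
  using \<gamma>m_le[of 0] \<gamma>_nonneg m_nonneg by (meson mult_nonneg_nonneg order_trans)

lemma cc_pos: "cc > 0" unfolding cc_def using q_lt L_pos by simp

lemma desc:
  assumes nb: "(norm (\<Theta> n))\<^sup>2 \<le> B0"
  shows "Vfun ls L idx (f 0) (\<Theta> (Suc n)) \<le> Vfun ls L idx (f 0) (\<Theta> n) - cc * \<gamma> n * Lo (\<Theta> n)"
proof -
  let ?\<theta> = "\<Theta> n" and ?g = "G (\<Theta> n)" and ?\<gamma> = "\<gamma> n"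
  have g0: "?\<gamma> \<ge> 0" using \<gamma>_nonneg by simp
  have Lo0: "Lo ?\<theta> \<ge> 0" by (rule Lo_nonneg)
  have "Vfun ls L idx (f 0) (\<Theta> (Suc n)) \<le> Vfun ls L idx (f 0) ?\<theta> - ?\<gamma> * (4 * real L * Lo ?\<theta>) + ?\<gamma>\<^sup>2 * (real L * (norm ?g)\<^sup>2)"
    using V_GD[OF G_def, of ?\<theta> ?\<gamma>] \<Theta>_step by simp
  also have "?\<gamma>\<^sup>2 * (real L * (norm ?g)\<^sup>2) \<le> ?\<gamma>\<^sup>2 * (real L * (4 * m * Lo ?\<theta> * Sf ?\<theta>))"
    using G_norm[OF G_def, of ?\<theta>] by (intro mult_left_mono) auto
  also have "?\<gamma>\<^sup>2 * (real L * (4 * m * Lo ?\<theta> * Sf ?\<theta>)) = (4 * real L * ?\<gamma> * Lo ?\<theta>) * (?\<gamma> * m * Sf ?\<theta>)"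
    by (simp add: power2_eq_square mult_ac)
  also have "\<dots> \<le> (4 * real L * ?\<gamma> * Lo ?\<theta>) * q"
  proof (rule mult_left_mono)
    have "?\<gamma> * m * Sf ?\<theta> \<le> ?\<gamma> * m * Kth"
      using Sf_le'[OF nb] g0 m_nonneg by (intro mult_left_mono) auto
    also have "\<dots> \<le> s\<gamma> * Kth" using \<gamma>m_le[of n] Kth_pos by (intro mult_right_mono) auto
    finally show "?\<gamma> * m * Sf ?\<theta> \<le> q" unfolding q_def .
    show "0 \<le> 4 * real L * ?\<gamma> * Lo ?\<theta>" using g0 Lo0 by simp
  qed
  finally show ?thesis unfolding cc_def by (simp add: algebra_simps)
qed

lemma V_lower: "Vfun ls L idx (f 0) \<theta> \<ge> - 2 * (real L)\<^sup>2 * (\<Sum>i=1..ls L. (f 0 i)\<^sup>2)"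
proof -
  have "0 \<le> (norm \<theta>)\<^sup>2" by simp
  then show ?thesis using norm_le_V[OF idx_bij L_pos, of \<theta> "f 0"] by linarith
qed

lemma bounded: "Vfun ls L idx (f 0) (\<Theta> n) \<le> Vfun ls L idx (f 0) (\<Theta> 0) \<and> (norm (\<Theta> n))\<^sup>2 \<le> B0"
proof (induction n)
  case 0
  show ?case using norm_le_V[OF idx_bij L_pos, of "\<Theta> 0" "f 0"] B0_def by simp
next
  case (Suc n)
  have "Vfun ls L idx (f 0) (\<Theta> (Suc n)) \<le> Vfun ls L idx (f 0) (\<Theta> n) - cc * \<gamma> n * Lo (\<Theta> n)"
    using desc Suc by blast
  also have "\<dots> \<le> Vfun ls L idx (f 0) (\<Theta> n)"
    using cc_pos \<gamma>_nonneg Lo_nonneg by (simp add: mult_nonneg_nonneg)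
  finally have V: "Vfun ls L idx (f 0) (\<Theta> (Suc n)) \<le> Vfun ls L idx (f 0) (\<Theta> 0)" using Suc by simp
  have "(norm (\<Theta> (Suc n)))\<^sup>2 \<le> 2 * Vfun ls L idx (f 0) (\<Theta> (Suc n)) + 4 * (real L)\<^sup>2 * (\<Sum>i=1..ls L. (f 0 i)\<^sup>2)"
    by (rule norm_le_V[OF idx_bij L_pos])
  also have "\<dots> \<le> B0" using V B0_def by simp
  finally show ?case using V by simp
qed

lemma norm_bound: "norm (\<Theta> n) \<le> sqrt B0"
  using bounded[of n] by (simp add: real_le_rsqrt)

lemma partial: "Vfun ls L idx (f 0) (\<Theta> N) + cc * (\<Sum>n<N. \<gamma> n * Lo (\<Theta> n)) \<le> Vfun ls L idx (f 0) (\<Theta> 0)"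
proof (induction N)
  case 0 then show ?case by simp
next
  case (Suc N)
  have "Vfun ls L idx (f 0) (\<Theta> (Suc N)) \<le> Vfun ls L idx (f 0) (\<Theta> N) - cc * \<gamma> N * Lo (\<Theta> N)"
    using desc bounded by blast
  then show ?case using Suc by (simp add: algebra_simps)
qed

lemma summable_gL: "summable (\<lambda>n. \<gamma> n * Lo (\<Theta> n))"
proof (rule summableI_nonneg_bounded)
  show "0 \<le> \<gamma> n * Lo (\<Theta> n)" for n using \<gamma>_nonneg Lo_nonneg by simp
  fix N
  have "cc * (\<Sum>n<N. \<gamma> n * Lo (\<Theta> n)) \<le> Vfun ls L idx (f 0) (\<Theta> 0) + 2 * (real L)\<^sup>2 * (\<Sum>i=1..ls L. (f 0 i)\<^sup>2)"
    using partial[of N] V_lower[of "\<Theta> N"] by simp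
  then show "(\<Sum>n<N. \<gamma> n * Lo (\<Theta> n)) \<le> (Vfun ls L idx (f 0) (\<Theta> 0) + 2 * (real L)\<^sup>2 * (\<Sum>i=1..ls L. (f 0 i)\<^sup>2)) / cc"
    using cc_pos by (simp add: field_simps)
qed

lemma step_norm: "(norm (\<Theta> (Suc n) - \<Theta> n))\<^sup>2 \<le> \<gamma> n * (\<gamma> n * m) * (4 * Lo (\<Theta> n) * Kth)"
proof -
  have "(norm (\<Theta> (Suc n) - \<Theta> n))\<^sup>2 = (\<gamma> n)\<^sup>2 * (norm (G (\<Theta> n)))\<^sup>2"
    using \<Theta>_step \<gamma>_nonneg by (simp add: power_mult_distrib)
  also have "\<dots> \<le> (\<gamma> n)\<^sup>2 * (4 * m * Lo (\<Theta> n) * Kth)"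
  proof (rule mult_left_mono)
    have "(norm (G (\<Theta> n)))\<^sup>2 \<le> 4 * m * Lo (\<Theta> n) * Sf (\<Theta> n)" by (rule G_norm[OF G_def])
    also have "\<dots> \<le> 4 * m * Lo (\<Theta> n) * Kth"
      using Sf_le'[OF bounded[THEN conjunct2]] m_nonneg Lo_nonneg by (intro mult_left_mono) auto
    finally show "(norm (G (\<Theta> n)))\<^sup>2 \<le> 4 * m * Lo (\<Theta> n) * Kth" .
  qed simp
  finally show ?thesis by (simp add: power2_eq_square mult_ac)
qed

lemma Lo_diff:
  assumes mpos: "m > 0"
  shows "\<exists>c2. \<forall>n. \<bar>Lo (\<Theta> (Suc n)) - Lo (\<Theta> n)\<bar> \<le> c2 * (\<gamma> n * Lo (\<Theta> n))"
proof -
  define \<Lambda> where "\<Lambda> = Lam (sqrt B0) Xb L"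
  define c' where "c' = 4 * \<bar>\<Lambda>\<bar> * Kth * m * (s\<gamma> + m)"
  define gmax where "gmax = s\<gamma> / m"
  have c'0: "c' \<ge> 0" unfolding c'_def using Kth_pos m_nonneg s\<gamma>_nonneg by simp
  have gmax: "\<gamma> n \<le> gmax" for n unfolding gmax_def using \<gamma>m_le[of n] mpos by (simp add: field_simps)
  have gm0: "gmax \<ge> 0" using gmax[of 0] \<gamma>_nonneg by (meson order_trans)
  define c2 where "c2 = 1 + gmax * (1 + c') + c'"
  have key: "(1 + 1 / \<gamma> n) * (m * (\<Lambda> * (norm (\<Theta> (Suc n) - \<Theta> n))\<^sup>2)) \<le> \<gamma> n * c' * Lo (\<Theta> n)"
    if gp: "\<gamma> n > 0" for n
  proof -
    let ?g = "\<gamma> n" and ?L = "Lo (\<Theta> n)"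
    have "(1 + 1 / ?g) * (m * (\<Lambda> * (norm (\<Theta> (Suc n) - \<Theta> n))\<^sup>2))
        \<le> (1 + 1 / ?g) * (m * (\<bar>\<Lambda>\<bar> * (?g * (?g * m) * (4 * ?L * Kth))))"
      using step_norm[of n] gp m_nonneg
      by (intro mult_left_mono mult_mono) (auto intro: add_nonneg_nonneg)
    also have "\<dots> = 4 * \<bar>\<Lambda>\<bar> * Kth * ?L * m * (?g * m) * (?g + 1)"
      using gp by (simp add: field_simps)
    also have "\<dots> = 4 * \<bar>\<Lambda>\<bar> * Kth * ?L * m * ?g * (?g * m + m)"
      by (simp add: algebra_simps)
    also have "\<dots> \<le> 4 * \<bar>\<Lambda>\<bar> * Kth * ?L * m * ?g * (s\<gamma> + m)"
      using \<gamma>m_le[of n] Lo_nonneg[of "\<Theta> n"] m_nonneg gp Kth_pos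
      by (intro mult_left_mono) (auto intro!: mult_nonneg_nonneg)
    also have "\<dots> = ?g * c' * ?L" unfolding c'_def by (simp add: mult_ac)
    finally show ?thesis .
  qed
  have nb: "norm (\<Theta> k) \<le> sqrt B0" for k by (rule norm_bound)
  show ?thesis
  proof (intro exI allI)
    fix n
    let ?g = "\<gamma> n" and ?L = "Lo (\<Theta> n)" and ?L' = "Lo (\<Theta> (Suc n))"
    show "\<bar>?L' - ?L\<bar> \<le> c2 * (?g * ?L)"
    proof (cases "?g = 0")
      case True
      then show ?thesis using \<Theta>_step by simp
    next
      case False
      then have gp: "?g > 0" using \<gamma>_nonneg by (simp add: order_le_neq_trans)
      have up: "?L' \<le> (1 + ?g) * ?L + ?g * c' * ?L"
        using Lo_change[OF nb[of n] nb[of "Suc n"] gp] key[OF gp] unfolding \<Lambda>_def by simp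
      have down: "?L \<le> (1 + ?g) * ?L' + ?g * c' * ?L"
        using Lo_change[OF nb[of "Suc n"] nb[of n] gp] key[OF gp] unfolding \<Lambda>_def
        by (simp add: norm_minus_commute)
      have L0: "?L \<ge> 0" "?L' \<ge> 0" using Lo_nonneg by auto
      have "?L' - ?L \<le> ?g * ?L * (1 + c')" using up by (simp add: algebra_simps)
      also have "\<dots> \<le> c2 * (?g * ?L)" unfolding c2_def using gp L0 gm0 c'0
        by (simp add: algebra_simps mult_nonneg_nonneg)
      finally have A: "?L' - ?L \<le> c2 * (?g * ?L)" .
      have "?L - ?L' \<le> ?g * ?L' + ?g * c' * ?L" using down by (simp add: algebra_simps)
      also have "?g * ?L' \<le> ?g * (?L + ?g * ?L * (1 + c'))"
        using up gp by (intro mult_left_mono) (auto simp: algebra_simps)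
      also have "?g * (?L + ?g * ?L * (1 + c')) + ?g * c' * ?L = (?g * ?L) * (1 + ?g * (1 + c') + c')"
        by (simp add: algebra_simps)
      also have "\<dots> \<le> (?g * ?L) * c2"
        unfolding c2_def using gmax[of n] gp L0 c'0
        by (intro mult_left_mono add_mono mult_right_mono) auto
      finally have B: "?L - ?L' \<le> c2 * (?g * ?L)" by (simp add: mult.commute)
      show ?thesis using A B by linarith
    qed
  qed
qed

lemma Lo_tendsto: "(\<lambda>n. Lo (\<Theta> n)) \<longlonglongrightarrow> 0"
proof (cases "m > 0")
  case False
  then have m0: "m = 0" using m_nonneg by simp
  have "Lo \<theta> = 0" for \<theta>
  proof -
    interpret finite_measure \<mu> by (rule fin)
    have e0: "emeasure \<mu> (space \<mu>) = 0" using m0 unfolding m_def by (simp add: emeasure_eq_measure)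
    have "AE x in \<mu>. err ls L idx idx0 act_inf f \<theta> x = 0"
      by (rule AE_I[where N="space \<mu>"]) (simp_all add: e0)
    then have "(\<integral>x. err ls L idx idx0 act_inf f \<theta> x \<partial>\<mu>) = 0"
      by (rule integral_eq_zero_AE)
    then show ?thesis unfolding Lo_def loss_def by simp
  qed
  then show ?thesis by simp
next
  case True
  obtain c2 where c2: "\<And>n. \<bar>Lo (\<Theta> (Suc n)) - Lo (\<Theta> n)\<bar> \<le> c2 * (\<gamma> n * Lo (\<Theta> n))"
    using Lo_diff[OF True] by blast
  have sd: "summable (\<lambda>n. Lo (\<Theta> (Suc n)) - Lo (\<Theta> n))"
  proof (rule summable_comparison_test[where g="\<lambda>n. c2 * (\<gamma> n * Lo (\<Theta> n))"])
    show "\<exists>N. \<forall>n\<ge>N. norm (Lo (\<Theta> (Suc n)) - Lo (\<Theta> n)) \<le> c2 * (\<gamma> n * Lo (\<Theta> n))" using c2 by auto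
    show "summable (\<lambda>n. c2 * (\<gamma> n * Lo (\<Theta> n)))" by (intro summable_mult summable_gL)
  qed
  have tel: "Lo (\<Theta> N) = Lo (\<Theta> 0) + (\<Sum>n<N. Lo (\<Theta> (Suc n)) - Lo (\<Theta> n))" for N
    by (subst sum_lessThan_telescope[where f="\<lambda>n. Lo (\<Theta> n)"]) simp
  define lim0 where "lim0 = Lo (\<Theta> 0) + suminf (\<lambda>n. Lo (\<Theta> (Suc n)) - Lo (\<Theta> n))"
  have "(\<lambda>N. Lo (\<Theta> 0) + (\<Sum>n<N. Lo (\<Theta> (Suc n)) - Lo (\<Theta> n))) \<longlonglongrightarrow> lim0"
    unfolding lim0_def by (intro tendsto_add tendsto_const summable_LIMSEQ sd)
  then have conv: "(\<lambda>N. Lo (\<Theta> N)) \<longlonglongrightarrow> lim0" by (simp only: tel[symmetric])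
  have l0: "lim0 \<ge> 0" by (rule LIMSEQ_le_const[OF conv]) (use Lo_nonneg in blast)
  have "lim0 = 0"
  proof (rule ccontr)
    assume "lim0 \<noteq> 0"
    then have lp: "lim0 > 0" using l0 by simp
    have "eventually (\<lambda>n. lim0 / 2 < Lo (\<Theta> n)) sequentially"
      by (rule order_tendstoD(1)[OF conv]) (use lp in simp)
    then have ev: "eventually (\<lambda>n. norm (\<gamma> n) \<le> (2 / lim0) * (\<gamma> n * Lo (\<Theta> n))) sequentially"
    proof (rule eventually_mono)
      fix n assume h: "lim0 / 2 < Lo (\<Theta> n)"
      have "\<gamma> n * (lim0 / 2) \<le> \<gamma> n * Lo (\<Theta> n)" using h \<gamma>_nonneg by (intro mult_left_mono) auto
      then show "norm (\<gamma> n) \<le> (2 / lim0) * (\<gamma> n * Lo (\<Theta> n))" using lp \<gamma>_nonneg by (simp add: field_simps)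
    qed
    have sg: "summable \<gamma>"
      by (rule summable_comparison_test_ev[OF ev]) (intro summable_mult summable_gL)
    have "eventually (\<lambda>N. suminf \<gamma> + 1 \<le> (\<Sum>n<N. \<gamma> n)) sequentially"
      using \<gamma>_div unfolding filterlim_at_top by blast
    then obtain N where "suminf \<gamma> + 1 \<le> (\<Sum>n<N. \<gamma> n)" by (auto simp: eventually_sequentially)
    moreover have "(\<Sum>n<N. \<gamma> n) \<le> suminf \<gamma>" using sg \<gamma>_nonneg by (intro sum_le_suminf) auto
    ultimately show False by simp
  qed
  then show ?thesis using conv by simp
qed

end


theorem theorem4p7:
  fixes L :: nat and ls :: "nat \<Rightarrow> nat" and a b AA BB :: real
    and idx :: "nat \<Rightarrow> 'n::finite" and idx0 :: "nat \<Rightarrow> 'm::finite"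
    and R :: "real \<Rightarrow> real \<Rightarrow> real"
    and \<mu> :: "(real^'m) measure" and f :: "real^'m \<Rightarrow> nat \<Rightarrow> real"
    and G :: "real^'n \<Rightarrow> real^'n"
    and \<gamma> :: "nat \<Rightarrow> real" and \<Theta> :: "nat \<Rightarrow> real^'n"
  assumes L_pos: "L \<ge> 1"
    and ls_pos: "\<forall>k. ls k \<ge> 1"
    and ab: "a < b"
    and A_pos: "0 < AA" and AB: "AA < BB"
    and idx_bij: "bij_betw idx {1..dd ls L} UNIV"
    and idx0_bij: "bij_betw idx0 {1..ls 0} UNIV"
    and R_C1: "\<forall>r\<ge>1. (\<forall>x. R r differentiable (at x)) \<and> continuous_on UNIV (deriv (R r))"
    and R_zero: "\<forall>r\<ge>1. \<forall>x. x \<le> AA / r \<longrightarrow> R r x = 0"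
    and R_bnd: "\<forall>r\<ge>1. \<forall>y. 0 \<le> R r y \<and> R r y \<le> max y 0"
    and R_id: "\<forall>r\<ge>1. \<forall>z. z \<ge> BB / r \<longrightarrow> R r z = z"
    and R_deriv_bdd: "\<exists>C. \<forall>r\<ge>1. \<forall>x. \<bar>deriv (R r) x\<bar> \<le> C"
    and \<mu>_sets: "sets \<mu> = sets (restrict_space borel (cbox (\<chi> _. a) (\<chi> _. b)))"
    and \<mu>_fin: "emeasure \<mu> (space \<mu>) \<noteq> \<infinity>"
    and f_meas: "\<forall>i\<in>{1..ls L}. (\<lambda>x. f x i) \<in> borel_measurable borel"
    and int_r: "\<forall>r\<ge>1. \<forall>\<theta>. integrable \<mu> (err ls L idx idx0 (act_r R r) f \<theta>)"
    and int_inf: "\<forall>\<theta>. integrable \<mu> (err ls L idx idx0 act_inf f \<theta>)"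
    and G_def: "\<forall>\<theta> g gs. (\<forall>r\<ge>1. (loss \<mu> ls L idx idx0 (act_r R r) f has_derivative (\<lambda>h. gs r \<bullet> h)) (at \<theta>))
                  \<and> (gs \<longlongrightarrow> g) at_top \<longrightarrow> G \<theta> = g"
    and f_const: "\<forall>x\<in>cbox (\<chi> _. a) (\<chi> _. b). \<forall>i\<in>{1..ls L}. f x i = f 0 i"
    and \<gamma>_nonneg: "\<forall>n. \<gamma> n \<ge> 0"
    and \<Theta>_step: "\<forall>n. \<Theta> (Suc n) = \<Theta> n - \<gamma> n *\<^sub>R G (\<Theta> n)"
    and \<gamma>_div: "filterlim (\<lambda>N. \<Sum>n<N. \<gamma> n) at_top sequentially"
    and \<gamma>_small: "bdd_above (range (\<lambda>n. \<gamma> n * measure \<mu> (space \<mu>))) \<and>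
       (SUP n. \<gamma> n * measure \<mu> (space \<mu>)) <
         1 / (real L * (max \<bar>a\<bar> (max \<bar>b\<bar> 1))\<^sup>2 * (\<Prod>p=0..L. real (ls p) + 1)
              * (2 * Vfun ls L idx (f 0) (\<Theta> 0) + 4 * (real L)\<^sup>2 * (\<Sum>i=1..ls L. (f 0 i)\<^sup>2) + 1) ^ (L - 1))"
  shows "bdd_above (range (\<lambda>n. norm (\<Theta> n))) \<and>
         (SUP n. norm (\<Theta> n)) \<le> sqrt (2 * Vfun ls L idx (f 0) (\<Theta> 0) + 4 * (real L)\<^sup>2 * (\<Sum>i=1..ls L. (f 0 i)\<^sup>2))
       \<and> limsup (\<lambda>n. ereal (loss \<mu> ls L idx idx0 act_inf f (\<Theta> n))) = 0"
proof -
  obtain C where Cb: "\<forall>r\<ge>1. \<forall>x. \<bar>deriv (R r) x\<bar> \<le> C" using R_deriv_bdd by blast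
  have RG: "Rgood R AA BB C" unfolding Rgood_def using A_pos AB R_C1 R_zero R_bnd R_id Cb by blast
  have Rcont: "\<forall>r\<ge>1. continuous_on UNIV (deriv (R r))" using R_C1 by blast
  interpret nnset L ls a b AA BB C idx idx0 R \<mu> f
    by unfold_locales (use L_pos idx_bij RG Rcont \<mu>_sets \<mu>_fin f_meas int_r int_inf f_const in auto)
  define B0 where "B0 = 2 * Vfun ls L idx (f 0) (\<Theta> 0) + 4 * (real L)\<^sup>2 * (\<Sum>i=1..ls L. (f 0 i)\<^sup>2)"
  define a1 where "a1 = max \<bar>a\<bar> (max \<bar>b\<bar> 1)"
  define P where "P = (\<Prod>p=0..L. real (ls p) + 1)"
  define Kth where "Kth = real L * a1\<^sup>2 * P * (B0 + 1) ^ (L - 1)"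
  have B0nn: "B0 \<ge> 0"
  proof -
    have "(norm (\<Theta> 0))\<^sup>2 \<le> B0" unfolding B0_def by (rule norm_le_V[OF idx_bij L_pos])
    then show ?thesis by (meson order_trans zero_le_power2)
  qed
  have a11: "a1 \<ge> 1" unfolding a1_def by simp
  have Pf: "P = (real (ls 0) + 1) * (\<Prod>p=Suc 0..L. real (ls p) + 1)"
    unfolding P_def by (simp add: prod.atLeast_Suc_atMost)
  have P2: "(\<Prod>p=Suc 0..L. real (ls p) + 1) \<ge> 1" by (intro prod_ge_1) auto
  have P1: "P \<ge> real (ls 0) + 1"
    unfolding Pf using P2 by (simp add: mult_le_cancel_left1)
  have Xle: "1 + real (ls 0) * (max \<bar>a\<bar> \<bar>b\<bar>)\<^sup>2 \<le> a1\<^sup>2 * P"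
  proof -
    have m2: "(max \<bar>a\<bar> \<bar>b\<bar>)\<^sup>2 \<le> a1\<^sup>2" unfolding a1_def by (intro power_mono) auto
    have o2: "1 \<le> a1\<^sup>2" using a11 by (simp add: one_le_power)
    have "1 + real (ls 0) * (max \<bar>a\<bar> \<bar>b\<bar>)\<^sup>2 \<le> a1\<^sup>2 + real (ls 0) * a1\<^sup>2"
      using m2 o2 by (intro add_mono mult_left_mono) auto
    also have "\<dots> = a1\<^sup>2 * (real (ls 0) + 1)" by (simp add: algebra_simps)
    also have "\<dots> \<le> a1\<^sup>2 * P" using P1 by (intro mult_left_mono) auto
    finally show ?thesis .
  qed
  have Sf_le: "\<forall>\<theta>::real^'n. (norm \<theta>)\<^sup>2 \<le> B0 \<longrightarrow> real L * (1 + (norm \<theta>)\<^sup>2) ^ (L - 1) * (1 + real (ls 0) * (max \<bar>a\<bar> \<bar>b\<bar>)\<^sup>2) \<le> Kth"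
  proof (intro allI impI)
    fix \<theta> :: "real^'n" assume nb: "(norm \<theta>)\<^sup>2 \<le> B0"
    have "(1 + (norm \<theta>)\<^sup>2) ^ (L - 1) \<le> (B0 + 1) ^ (L - 1)" using nb by (intro power_mono) auto
    then have "real L * (1 + (norm \<theta>)\<^sup>2) ^ (L - 1) * (1 + real (ls 0) * (max \<bar>a\<bar> \<bar>b\<bar>)\<^sup>2)
        \<le> real L * (B0 + 1) ^ (L - 1) * (a1\<^sup>2 * P)"
      using Xle B0nn by (intro mult_mono) auto
    then show "real L * (1 + (norm \<theta>)\<^sup>2) ^ (L - 1) * (1 + real (ls 0) * (max \<bar>a\<bar> \<bar>b\<bar>)\<^sup>2) \<le> Kth"
      unfolding Kth_def by (simp add: mult_ac)
  qed
  have Kth_pos: "Kth > 0"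
  proof -
    have "P \<ge> 1" using P1 by simp
    moreover have "a1\<^sup>2 > 0" using a11 by simp
    moreover have "(B0 + 1) ^ (L - 1) > 0" using B0nn by simp
    ultimately show ?thesis unfolding Kth_def using L_pos by simp
  qed
  have \<gamma>_lt: "(SUP n. \<gamma> n * measure \<mu> (space \<mu>)) * Kth < 1"
  proof -
    have "(SUP n. \<gamma> n * measure \<mu> (space \<mu>)) < 1 / Kth"
      using \<gamma>_small unfolding Kth_def B0_def a1_def P_def by simp
    then show ?thesis using Kth_pos by (simp add: pos_less_divide_eq)
  qed
  interpret nngd L ls a b AA BB C idx idx0 R \<mu> f G \<gamma> \<Theta> B0 Kth
    by unfold_locales (use G_def \<gamma>_nonneg \<Theta>_step \<gamma>_div \<gamma>_small \<gamma>_lt B0_def Sf_le Kth_pos in auto)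
  have nb: "norm (\<Theta> n) \<le> sqrt B0" for n by (rule norm_bound)
  have bdd: "bdd_above (range (\<lambda>n. norm (\<Theta> n)))" using nb by (intro bdd_aboveI2) auto
  have sup: "(SUP n. norm (\<Theta> n)) \<le> sqrt B0" using nb by (intro cSUP_least) auto
  have "(\<lambda>n. ereal (loss \<mu> ls L idx idx0 act_inf f (\<Theta> n))) \<longlonglongrightarrow> ereal 0"
    using Lo_tendsto unfolding Lo_def by (intro tendsto_ereal)
  then have "limsup (\<lambda>n. ereal (loss \<mu> ls L idx idx0 act_inf f (\<Theta> n))) = ereal 0"
    by (intro lim_imp_Limsup) auto
  then show ?thesis using bdd sup unfolding B0_def by (simp add: zero_ereal_def)
qed


end
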